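(* Let $p\ge5$ be a prime, let $H$ be the group of upper unitriangular $5\times5$ matrices over $\mathbb{F}_p$, and let $t_{ij}=1+e_{ij}\in H$ for $i<j$ (with $e_{ij}$ the matrix unit). Let $G=\langle x,y\rangle\times H$, where $\langle x,y\rangle$ is elementary abelian of order $p^2$, let $K=\gamma_4(H)=\langle t_{15}\rangle$ and $A=\gamma_2(H)$. Then $K\le Z(G)$, $A/K$ is abelian (while $A$ is not), and the assignment $x\mapsto t_{13}K$, $y\mapsto t_{35}K$, $t_{ij}\mapsto K$ uniquely defines an endomorphism $\psi$ of $G/K$ with image in $A/K$. The endomorphism $\psi$ is not induced by any endomorphism of $G$. Moreover, there is no endomorphism $\phi$ of $G$ and no bilinear map $\alpha:G\times G\to K$ such that for all $g,h\in G$ $$g\cdot\psi^\uparrow(g)\cdot h\cdot\psi^\uparrow(g)^{-1}=g\cdot\phi(g)\cdot h\cdot\phi(g)^{-1}\cdot\alpha(g,h),$$ where $\psi^\uparrow:G\to A$ is any lifting of $\psi$ (i.e. $\psi^\uparrow(g)K=\psi(gK)$ for all $g$).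
   Context: $\gamma_k(H)$ denotes the $k$-th term of the lower central series ($\gamma_1(H)=H$, $\gamma_{k+1}(H)=[\gamma_k(H),H]$). A map $\alpha:G\times G\to K$ is bilinear if $\alpha(gh,k)=\alpha(g,k)\alpha(h,k)$ and $\alpha(g,hk)=\alpha(g,h)\alpha(g,k)$ for all $g,h,k\in G$. *)

theory Defs
  imports "HOL-Algebra.Algebra"
begin

primrec lcs_aux :: "('a, 'b) monoid_scheme \<Rightarrow> nat \<Rightarrow> 'a set" where
  "lcs_aux G 0 = carrier G"
| "lcs_aux G (Suc k) =
     generate G {a \<otimes>\<^bsub>G\<^esub> b \<otimes>\<^bsub>G\<^esub> inv\<^bsub>G\<^esub> a \<otimes>\<^bsub>G\<^esub> inv\<^bsub>G\<^esub> b
                 | a b. a \<in> lcs_aux G k \<and> b \<in> carrier G}"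

definition gamma :: "('a, 'b) monoid_scheme \<Rightarrow> nat \<Rightarrow> 'a set" where
  "gamma G k = lcs_aux G (k - 1)"

definition center_of :: "('a, 'b) monoid_scheme \<Rightarrow> 'a set" where
  "center_of G = {z \<in> carrier G. \<forall>g \<in> carrier G. z \<otimes>\<^bsub>G\<^esub> g = g \<otimes>\<^bsub>G\<^esub> z}"

text \<open>Matrices are functions nat => nat => int, indices 1..5, entries in {0..<p}
  (representing F_p), zero outside the index range.\<close>

definition unitri_carrier :: "nat \<Rightarrow> (nat \<Rightarrow> nat \<Rightarrow> int) set" where
  "unitri_carrier p = {M. (\<forall>i j. (i \<in> {1..5} \<and> j \<in> {1..5} \<longrightarrow> M i j \<in> {0..<int p})
        \<and> (i \<notin> {1..5} \<or> j \<notin> {1..5} \<longrightarrow> M i j = 0)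
        \<and> (i \<in> {1..5} \<longrightarrow> M i i = 1)
        \<and> (j < i \<longrightarrow> M i j = 0))}"

definition mat_mult_mod :: "nat \<Rightarrow> (nat \<Rightarrow> nat \<Rightarrow> int) \<Rightarrow> (nat \<Rightarrow> nat \<Rightarrow> int) \<Rightarrow> (nat \<Rightarrow> nat \<Rightarrow> int)" where
  "mat_mult_mod p M N = (\<lambda>i j. if i \<in> {1..5} \<and> j \<in> {1..5}
       then (\<Sum>k\<in>{1..5}. M i k * N k j) mod int p else 0)"

definition mat_one :: "nat \<Rightarrow> nat \<Rightarrow> int" where
  "mat_one = (\<lambda>i j. if i = j \<and> i \<in> {1..5} then 1 else 0)"

definition UT5 :: "nat \<Rightarrow> (nat \<Rightarrow> nat \<Rightarrow> int) monoid" where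
  "UT5 p = \<lparr>carrier = unitri_carrier p, monoid.mult = mat_mult_mod p, one = mat_one\<rparr>"

definition tmat :: "nat \<Rightarrow> nat \<Rightarrow> (nat \<Rightarrow> nat \<Rightarrow> int)" where
  "tmat i j = (\<lambda>a b. mat_one a b + (if a = i \<and> b = j then 1 else 0))"

definition Ggrp :: "nat \<Rightarrow> ((int \<times> int) \<times> (nat \<Rightarrow> nat \<Rightarrow> int)) monoid" where
  "Ggrp p = (integer_mod_group p \<times>\<times> integer_mod_group p) \<times>\<times> UT5 p"

definition embH :: "(nat \<Rightarrow> nat \<Rightarrow> int) \<Rightarrow> (int \<times> int) \<times> (nat \<Rightarrow> nat \<Rightarrow> int)" where
  "embH h = ((0, 0), h)"

definition xG :: "(int \<times> int) \<times> (nat \<Rightarrow> nat \<Rightarrow> int)" where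
  "xG = ((1, 0), mat_one)"

definition yG :: "(int \<times> int) \<times> (nat \<Rightarrow> nat \<Rightarrow> int)" where
  "yG = ((0, 1), mat_one)"

definition tG :: "nat \<Rightarrow> nat \<Rightarrow> (int \<times> int) \<times> (nat \<Rightarrow> nat \<Rightarrow> int)" where
  "tG i j = embH (tmat i j)"

definition Kgrp :: "nat \<Rightarrow> ((int \<times> int) \<times> (nat \<Rightarrow> nat \<Rightarrow> int)) set" where
  "Kgrp p = embH ` gamma (UT5 p) 4"

definition Agrp :: "nat \<Rightarrow> ((int \<times> int) \<times> (nat \<Rightarrow> nat \<Rightarrow> int)) set" where
  "Agrp p = embH ` gamma (UT5 p) 2"

definition bilinear_on :: "('a, 'b) monoid_scheme \<Rightarrow> 'a set \<Rightarrow> ('a \<Rightarrow> 'a \<Rightarrow> 'a) \<Rightarrow> bool" where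
  "bilinear_on G K \<alpha> \<longleftrightarrow>
     (\<forall>g \<in> carrier G. \<forall>h \<in> carrier G. \<alpha> g h \<in> K) \<and>
     (\<forall>g \<in> carrier G. \<forall>h \<in> carrier G. \<forall>k \<in> carrier G.
        \<alpha> (g \<otimes>\<^bsub>G\<^esub> h) k = \<alpha> g k \<otimes>\<^bsub>G\<^esub> \<alpha> h k \<and>
        \<alpha> g (h \<otimes>\<^bsub>G\<^esub> k) = \<alpha> g h \<otimes>\<^bsub>G\<^esub> \<alpha> g k)"

end

theory Submission
  imports Defs
begin


declare One_nat_def [simp del]

lemma sum5: "(\<Sum>k\<in>{1..5::nat}. f k) = f 1 + f 2 + f 3 + f 4 + f 5"
proof -
  have "{1..5::nat} = {1,2,3,4,5}" by auto
  then show ?thesis by (simp add: add.assoc)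
qed

locale ut = fixes p :: nat assumes p2: "2 \<le> p"
begin

lemma p0: "0 < int p" using p2 by simp

lemma carD_rng: "M \<in> unitri_carrier p \<Longrightarrow> 1 \<le> i \<Longrightarrow> i \<le> 5 \<Longrightarrow> 1 \<le> j \<Longrightarrow> j \<le> 5 \<Longrightarrow> 0 \<le> M i j \<and> M i j < int p"
  by (auto simp: unitri_carrier_def)
lemma carD_low: "M \<in> unitri_carrier p \<Longrightarrow> j < i \<Longrightarrow> M i j = 0"
  by (auto simp: unitri_carrier_def)
lemma carD_diag: "M \<in> unitri_carrier p \<Longrightarrow> 1 \<le> i \<Longrightarrow> i \<le> 5 \<Longrightarrow> M i i = 1"
  by (auto simp: unitri_carrier_def)
lemma carD_out: "M \<in> unitri_carrier p \<Longrightarrow> \<not> (i \<in> {1..5} \<and> j \<in> {1..5}) \<Longrightarrow> M i j = 0"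
  by (auto simp: unitri_carrier_def)

lemma modid: "M \<in> unitri_carrier p \<Longrightarrow> 1 \<le> i \<Longrightarrow> i \<le> 5 \<Longrightarrow> 1 \<le> j \<Longrightarrow> j \<le> 5 \<Longrightarrow> M i j mod int p = M i j"
  using carD_rng[of M i j] by simp

lemmas cars = carD_low carD_diag

lemma m12: "M \<in> unitri_carrier p \<Longrightarrow> N \<in> unitri_carrier p \<Longrightarrow> mat_mult_mod p M N 1 2 = (M 1 2 + N 1 2) mod p"
  by (simp add: mat_mult_mod_def sum5 cars, simp add: ac_simps)
lemma m23: "M \<in> unitri_carrier p \<Longrightarrow> N \<in> unitri_carrier p \<Longrightarrow> mat_mult_mod p M N 2 3 = (M 2 3 + N 2 3) mod p"
  by (simp add: mat_mult_mod_def sum5 cars, simp add: ac_simps)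
lemma m34: "M \<in> unitri_carrier p \<Longrightarrow> N \<in> unitri_carrier p \<Longrightarrow> mat_mult_mod p M N 3 4 = (M 3 4 + N 3 4) mod p"
  by (simp add: mat_mult_mod_def sum5 cars, simp add: ac_simps)
lemma m45: "M \<in> unitri_carrier p \<Longrightarrow> N \<in> unitri_carrier p \<Longrightarrow> mat_mult_mod p M N 4 5 = (M 4 5 + N 4 5) mod p"
  by (simp add: mat_mult_mod_def sum5 cars, simp add: ac_simps)
lemma m13: "M \<in> unitri_carrier p \<Longrightarrow> N \<in> unitri_carrier p \<Longrightarrow> mat_mult_mod p M N 1 3 = (M 1 3 + N 1 3 + M 1 2 * N 2 3) mod p"
  by (simp add: mat_mult_mod_def sum5 cars, simp add: ac_simps)
lemma m24: "M \<in> unitri_carrier p \<Longrightarrow> N \<in> unitri_carrier p \<Longrightarrow> mat_mult_mod p M N 2 4 = (M 2 4 + N 2 4 + M 2 3 * N 3 4) mod p"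
  by (simp add: mat_mult_mod_def sum5 cars, simp add: ac_simps)
lemma m35: "M \<in> unitri_carrier p \<Longrightarrow> N \<in> unitri_carrier p \<Longrightarrow> mat_mult_mod p M N 3 5 = (M 3 5 + N 3 5 + M 3 4 * N 4 5) mod p"
  by (simp add: mat_mult_mod_def sum5 cars, simp add: ac_simps)
lemma m14: "M \<in> unitri_carrier p \<Longrightarrow> N \<in> unitri_carrier p \<Longrightarrow> mat_mult_mod p M N 1 4 = (M 1 4 + N 1 4 + M 1 2 * N 2 4 + M 1 3 * N 3 4) mod p"
  by (simp add: mat_mult_mod_def sum5 cars, simp add: ac_simps)
lemma m25: "M \<in> unitri_carrier p \<Longrightarrow> N \<in> unitri_carrier p \<Longrightarrow> mat_mult_mod p M N 2 5 = (M 2 5 + N 2 5 + M 2 3 * N 3 5 + M 2 4 * N 4 5) mod p"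
  by (simp add: mat_mult_mod_def sum5 cars, simp add: ac_simps)
lemma m15: "M \<in> unitri_carrier p \<Longrightarrow> N \<in> unitri_carrier p \<Longrightarrow> mat_mult_mod p M N 1 5 = (M 1 5 + N 1 5 + M 1 2 * N 2 5 + M 1 3 * N 3 5 + M 1 4 * N 4 5) mod p"
  by (simp add: mat_mult_mod_def sum5 cars, simp add: ac_simps)

lemmas mm = m12 m23 m34 m45 m13 m24 m35 m14 m25 m15

lemma idx5: "i \<in> {1..5::nat} \<Longrightarrow> i = 1 \<or> i = 2 \<or> i = 3 \<or> i = 4 \<or> i = 5" by auto

lemma mat_eqI:
  assumes M: "M \<in> unitri_carrier p" and N: "N \<in> unitri_carrier p"
   and "M 1 2 = N 1 2" "M 2 3 = N 2 3" "M 3 4 = N 3 4" "M 4 5 = N 4 5"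
   "M 1 3 = N 1 3" "M 2 4 = N 2 4" "M 3 5 = N 3 5" "M 1 4 = N 1 4" "M 2 5 = N 2 5" "M 1 5 = N 1 5"
  shows "M = N"
proof (intro ext)
  fix i j
  show "M i j = N i j"
  proof (cases "i \<in> {1..5} \<and> j \<in> {1..5}")
    case False then show ?thesis using carD_out[OF M] carD_out[OF N] by metis
  next
    case True
    then have i: "i = 1 \<or> i = 2 \<or> i = 3 \<or> i = 4 \<or> i = 5" and j: "j = 1 \<or> j = 2 \<or> j = 3 \<or> j = 4 \<or> j = 5"
      using idx5 by blast+
    show ?thesis
    proof (cases "j < i")
      case True then show ?thesis using carD_low[OF M] carD_low[OF N] by metis
    next
      case False
      show ?thesis using i j False
        by (elim disjE) (simp_all add: assms(3-12) carD_diag[OF M] carD_diag[OF N])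
    qed
  qed
qed

lemma mult_car: assumes M: "M \<in> unitri_carrier p" and N: "N \<in> unitri_carrier p"
  shows "mat_mult_mod p M N \<in> unitri_carrier p"
proof -
  have diag: "mat_mult_mod p M N i i = 1" if "i \<in> {1..5}" for i
    using idx5[OF that] p2 by (elim disjE) (simp_all add: mat_mult_mod_def sum5 cars M N)
  have low: "mat_mult_mod p M N i j = 0" if "j < i" for i j
  proof -
    have "(\<Sum>k\<in>{1..5}. M i k * N k j) = 0"
    proof (rule sum.neutral, rule ballI)
      fix k show "M i k * N k j = 0"
      proof (cases "k < i")
        case True then show ?thesis using carD_low[OF M] by simp
      next
        case False then have "j < k" using that by simp
        then show ?thesis using carD_low[OF N] by simp
      qed
    qed
    then show ?thesis by (simp add: mat_mult_mod_def)
  qed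
  have rng: "mat_mult_mod p M N i j \<in> {0..<int p}" if "i \<in> {1..5}" "j \<in> {1..5}" for i j
    using that p0 by (simp add: mat_mult_mod_def)
  have out: "mat_mult_mod p M N i j = 0" if "\<not>(i \<in> {1..5} \<and> j \<in> {1..5})" for i j
    unfolding mat_mult_mod_def by (rule if_not_P[OF that])
  show ?thesis unfolding unitri_carrier_def
    using diag low rng out by blast
qed

end


definition meq :: "nat \<Rightarrow> int \<Rightarrow> int \<Rightarrow> bool" where
  "meq p a b \<longleftrightarrow> a mod int p = b mod int p"

lemma meq_refl: "meq p a a" by (simp add: meq_def)
lemma meq_add: "meq p a b \<Longrightarrow> meq p c d \<Longrightarrow> meq p (a + c) (b + d)"
  unfolding meq_def by (rule mod_add_cong)
lemma meq_mult: "meq p a b \<Longrightarrow> meq p c d \<Longrightarrow> meq p (a * c) (b * d)"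
  unfolding meq_def by (rule mod_mult_cong)
lemma meq_diff: "meq p a b \<Longrightarrow> meq p c d \<Longrightarrow> meq p (a - c) (b - d)"
  unfolding meq_def by (rule mod_diff_cong)
lemma meq_minus: "meq p a b \<Longrightarrow> meq p (- a) (- b)"
  unfolding meq_def by (rule mod_minus_cong)
lemma meq_mod: "meq p a b \<Longrightarrow> meq p (a mod int p) b"
  by (simp add: meq_def)
lemmas mstrip = meq_mod meq_add meq_mult meq_diff meq_minus meq_refl

lemma modeqI: "meq p a x \<Longrightarrow> meq p b y \<Longrightarrow> x = y \<Longrightarrow> a mod int p = b mod int p"
  by (simp add: meq_def)

lemma modeq0: "meq p a x \<Longrightarrow> x = 0 \<Longrightarrow> a mod int p = 0"
  by (simp add: meq_def)

definition sel :: "int \<Rightarrow> int \<Rightarrow> int \<Rightarrow> int \<Rightarrow> int \<Rightarrow> int \<Rightarrow> int \<Rightarrow> int \<Rightarrow> int \<Rightarrow> int \<Rightarrow> nat \<Rightarrow> nat \<Rightarrow> int" where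
  "sel a12 a23 a34 a45 a13 a24 a35 a14 a25 a15 i j =
     (if i = 1 \<and> j = 2 then a12
      else if i = 2 \<and> j = 3 then a23
      else if i = 3 \<and> j = 4 then a34
      else if i = 4 \<and> j = 5 then a45
      else if i = 1 \<and> j = 3 then a13
      else if i = 2 \<and> j = 4 then a24
      else if i = 3 \<and> j = 5 then a35
      else if i = 1 \<and> j = 4 then a14
      else if i = 2 \<and> j = 5 then a25
      else if i = 1 \<and> j = 5 then a15
      else 0)"

definition mk :: "nat \<Rightarrow> int \<Rightarrow> int \<Rightarrow> int \<Rightarrow> int \<Rightarrow> int \<Rightarrow> int \<Rightarrow> int \<Rightarrow> int \<Rightarrow> int \<Rightarrow> int \<Rightarrow> nat \<Rightarrow> nat \<Rightarrow> int" where
  "mk p a12 a23 a34 a45 a13 a24 a35 a14 a25 a15 = (\<lambda>i j. if i \<in> {1..5} \<and> j \<in> {1..5} then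
     (if i = j then 1 else if i < j then sel a12 a23 a34 a45 a13 a24 a35 a14 a25 a15 i j mod int p else 0) else 0)"

context ut begin

lemma mk_car: "mk p a12 a23 a34 a45 a13 a24 a35 a14 a25 a15 \<in> unitri_carrier p"
  using p0 p2 unfolding unitri_carrier_def mk_def by simp

lemma mk_e:
  "mk p a12 a23 a34 a45 a13 a24 a35 a14 a25 a15 1 2 = a12 mod int p"
  "mk p a12 a23 a34 a45 a13 a24 a35 a14 a25 a15 2 3 = a23 mod int p"
  "mk p a12 a23 a34 a45 a13 a24 a35 a14 a25 a15 3 4 = a34 mod int p"
  "mk p a12 a23 a34 a45 a13 a24 a35 a14 a25 a15 4 5 = a45 mod int p"
  "mk p a12 a23 a34 a45 a13 a24 a35 a14 a25 a15 1 3 = a13 mod int p"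
  "mk p a12 a23 a34 a45 a13 a24 a35 a14 a25 a15 2 4 = a24 mod int p"
  "mk p a12 a23 a34 a45 a13 a24 a35 a14 a25 a15 3 5 = a35 mod int p"
  "mk p a12 a23 a34 a45 a13 a24 a35 a14 a25 a15 1 4 = a14 mod int p"
  "mk p a12 a23 a34 a45 a13 a24 a35 a14 a25 a15 2 5 = a25 mod int p"
  "mk p a12 a23 a34 a45 a13 a24 a35 a14 a25 a15 1 5 = a15 mod int p"
  by (simp_all add: mk_def sel_def)

lemma one_mk: "mat_one = mk p 0 0 0 0 0 0 0 0 0 0"
  unfolding mat_one_def mk_def sel_def by (intro ext) simp

lemma one_car: "mat_one \<in> unitri_carrier p"
  using one_mk mk_car by metis

lemma one_e: "mat_one 1 2 = 0" "mat_one 2 3 = 0" "mat_one 3 4 = 0" "mat_one 4 5 = 0"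
  "mat_one 1 3 = 0" "mat_one 2 4 = 0" "mat_one 3 5 = 0" "mat_one 1 4 = 0" "mat_one 2 5 = 0" "mat_one 1 5 = 0"
  by (simp_all add: mat_one_def)

lemma l_one: "M \<in> unitri_carrier p \<Longrightarrow> mat_mult_mod p mat_one M = M"
  by (rule mat_eqI) (simp_all add: mult_car one_car mm one_e modid)

lemma r_one: "M \<in> unitri_carrier p \<Longrightarrow> mat_mult_mod p M mat_one = M"
  by (rule mat_eqI) (simp_all add: mult_car one_car mm one_e modid)

lemma assoc: assumes M: "M \<in> unitri_carrier p" and N: "N \<in> unitri_carrier p" and P: "P \<in> unitri_carrier p"
  shows "mat_mult_mod p (mat_mult_mod p M N) P = mat_mult_mod p M (mat_mult_mod p N P)"
  apply (rule mat_eqI)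
  apply (simp_all add: mult_car M N P mm)
  apply (rule modeqI, (rule mstrip)+, simp add: algebra_simps)+
  done

definition minv :: "(nat \<Rightarrow> nat \<Rightarrow> int) \<Rightarrow> nat \<Rightarrow> nat \<Rightarrow> int" where
  "minv M = (let y12 = - M 1 2; y23 = - M 2 3; y34 = - M 3 4; y45 = - M 4 5;
     y13 = - (M 1 3 + y12 * M 2 3); y24 = - (M 2 4 + y23 * M 3 4); y35 = - (M 3 5 + y34 * M 4 5);
     y14 = - (M 1 4 + y12 * M 2 4 + y13 * M 3 4); y25 = - (M 2 5 + y23 * M 3 5 + y24 * M 4 5);
     y15 = - (M 1 5 + y12 * M 2 5 + y13 * M 3 5 + y14 * M 4 5)
     in mk p y12 y23 y34 y45 y13 y24 y35 y14 y25 y15)"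

lemma minv_car: "minv M \<in> unitri_carrier p"
  unfolding minv_def Let_def by (rule mk_car)

lemma minv_l: assumes M: "M \<in> unitri_carrier p" shows "mat_mult_mod p (minv M) M = mat_one"
  apply (rule mat_eqI)
  apply (simp_all add: mult_car M minv_car one_car mm one_e)
  apply (simp_all add: minv_def Let_def mk_e)
  apply (rule modeq0, (rule mstrip)+, simp add: algebra_simps)+
  done

lemma UT5_group: "group (UT5 p)"
proof -
  have "monoid (UT5 p)"
    by (rule monoidI) (auto simp: UT5_def mult_car one_car assoc l_one r_one)
  then show ?thesis
  proof (rule monoid.group_l_invI)
    fix x assume "x \<in> carrier (UT5 p)"
    then show "\<exists>y\<in>carrier (UT5 p). y \<otimes>\<^bsub>UT5 p\<^esub> x = \<one>\<^bsub>UT5 p\<^esub>"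
      by (intro bexI[of _ "minv x"]) (auto simp: UT5_def minv_car minv_l)
  qed
qed

end


context ut begin

definition lev :: "nat \<Rightarrow> (nat \<Rightarrow> nat \<Rightarrow> int) \<Rightarrow> bool" where
 "lev k M \<longleftrightarrow> (1 < k \<longrightarrow> M 1 2 = 0 \<and> M 2 3 = 0 \<and> M 3 4 = 0 \<and> M 4 5 = 0) \<and>
    (2 < k \<longrightarrow> M 1 3 = 0 \<and> M 2 4 = 0 \<and> M 3 5 = 0) \<and> (3 < k \<longrightarrow> M 1 4 = 0 \<and> M 2 5 = 0) \<and>
    (4 < k \<longrightarrow> M 1 5 = 0)"

definition agr :: "nat \<Rightarrow> (nat \<Rightarrow> nat \<Rightarrow> int) \<Rightarrow> (nat \<Rightarrow> nat \<Rightarrow> int) \<Rightarrow> bool" where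
 "agr k U V \<longleftrightarrow> (1 < k \<longrightarrow> U 1 2 = V 1 2 \<and> U 2 3 = V 2 3 \<and> U 3 4 = V 3 4 \<and> U 4 5 = V 4 5) \<and>
    (2 < k \<longrightarrow> U 1 3 = V 1 3 \<and> U 2 4 = V 2 4 \<and> U 3 5 = V 3 5) \<and> (3 < k \<longrightarrow> U 1 4 = V 1 4 \<and> U 2 5 = V 2 5) \<and>
    (4 < k \<longrightarrow> U 1 5 = V 1 5)"

definition S :: "nat \<Rightarrow> (nat \<Rightarrow> nat \<Rightarrow> int) set" where
  "S k = {M \<in> unitri_carrier p. lev k M}"

lemma z0: assumes Z: "Z \<in> unitri_carrier p" and Y: "Y \<in> unitri_carrier p"
  and ij: "1 \<le> i" "i \<le> 5" "1 \<le> j" "j \<le> 5" and e: "(Z i j + Y i j) mod int p = Y i j"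
  shows "Z i j = 0"
proof -
  have r: "0 \<le> Z i j" "Z i j < int p" using carD_rng[OF Z ij] by auto
  have "(Z i j + Y i j) mod int p = Y i j mod int p" using e modid[OF Y ij] by simp
  then have "int p dvd Z i j" by (simp add: mod_eq_dvd_iff)
  show ?thesis
  proof (rule ccontr)
    assume "Z i j \<noteq> 0" then have "0 < Z i j" using r by simp
    then have "int p \<le> Z i j" by (rule zdvd_imp_le[OF \<open>int p dvd Z i j\<close>])
    then show False using r by simp
  qed
qed

lemma agree: assumes Z: "Z \<in> unitri_carrier p" and Y: "Y \<in> unitri_carrier p"
  and A: "agr k (mat_mult_mod p Z Y) Y" shows "lev k Z"
proof -
  note e = mm[OF Z Y]
  have z12: "1 < k \<Longrightarrow> Z 1 2 = 0" using A e by (intro z0[OF Z Y]) (auto simp: agr_def)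
  have z23: "1 < k \<Longrightarrow> Z 2 3 = 0" using A e by (intro z0[OF Z Y]) (auto simp: agr_def)
  have z34: "1 < k \<Longrightarrow> Z 3 4 = 0" using A e by (intro z0[OF Z Y]) (auto simp: agr_def)
  have z45: "1 < k \<Longrightarrow> Z 4 5 = 0" using A e by (intro z0[OF Z Y]) (auto simp: agr_def)
  have z13: "2 < k \<Longrightarrow> Z 1 3 = 0" using A e z12 by (intro z0[OF Z Y]) (auto simp: agr_def)
  have z24: "2 < k \<Longrightarrow> Z 2 4 = 0" using A e z23 by (intro z0[OF Z Y]) (auto simp: agr_def)
  have z35: "2 < k \<Longrightarrow> Z 3 5 = 0" using A e z34 by (intro z0[OF Z Y]) (auto simp: agr_def)
  have z14: "3 < k \<Longrightarrow> Z 1 4 = 0" using A e z12 z13 by (intro z0[OF Z Y]) (auto simp: agr_def)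
  have z25: "3 < k \<Longrightarrow> Z 2 5 = 0" using A e z23 z24 by (intro z0[OF Z Y]) (auto simp: agr_def)
  have z15: "4 < k \<Longrightarrow> Z 1 5 = 0" using A e z12 z13 z14 by (intro z0[OF Z Y]) (auto simp: agr_def)
  show ?thesis unfolding lev_def
    using z12 z23 z34 z45 z13 z24 z35 z14 z25 z15 by simp
qed

lemma lev_mult: "U \<in> unitri_carrier p \<Longrightarrow> Y \<in> unitri_carrier p \<Longrightarrow> lev k U \<Longrightarrow> lev k Y \<Longrightarrow> lev k (mat_mult_mod p U Y)"
  by (auto simp: lev_def mm)

lemma lev_one: "lev k mat_one" by (simp add: lev_def one_e)

lemma lev_inv: assumes U: "U \<in> unitri_carrier p" and l: "lev k U" shows "lev k (minv U)"
  by (rule agree[OF minv_car U]) (use l in \<open>auto simp: minv_l[OF U] agr_def lev_def one_e\<close>)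

lemma inv_H: "M \<in> unitri_carrier p \<Longrightarrow> inv\<^bsub>UT5 p\<^esub> M = minv M"
  by (rule group.inv_equality[OF UT5_group]) (simp_all add: UT5_def minv_l minv_car)

lemma car_H: "carrier (UT5 p) = unitri_carrier p" by (simp add: UT5_def)
lemma mult_H: "x \<otimes>\<^bsub>UT5 p\<^esub> y = mat_mult_mod p x y" by (simp add: UT5_def)
lemma one_H: "\<one>\<^bsub>UT5 p\<^esub> = mat_one" by (simp add: UT5_def)

lemma S_sub: "subgroup (S k) (UT5 p)"
proof (rule group.subgroupI[OF UT5_group])
  show "S k \<subseteq> carrier (UT5 p)" by (auto simp: S_def car_H)
  show "S k \<noteq> {}" using lev_one one_car by (auto simp: S_def)
  show "inv\<^bsub>UT5 p\<^esub> a \<in> S k" if "a \<in> S k" for a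
    using that by (auto simp: S_def inv_H lev_inv minv_car)
  show "a \<otimes>\<^bsub>UT5 p\<^esub> b \<in> S k" if "a \<in> S k" "b \<in> S k" for a b
    using that by (auto simp: S_def mult_H lev_mult mult_car)
qed

lemma comm_lev: assumes a: "a \<in> unitri_carrier p" and b: "b \<in> unitri_carrier p" and l: "lev k a"
  shows "lev (Suc k) (a \<otimes>\<^bsub>UT5 p\<^esub> b \<otimes>\<^bsub>UT5 p\<^esub> inv\<^bsub>UT5 p\<^esub> a \<otimes>\<^bsub>UT5 p\<^esub> inv\<^bsub>UT5 p\<^esub> b)"
proof -
  interpret H: group "UT5 p" by (rule UT5_group)
  let ?c = "a \<otimes>\<^bsub>UT5 p\<^esub> b \<otimes>\<^bsub>UT5 p\<^esub> inv\<^bsub>UT5 p\<^esub> a \<otimes>\<^bsub>UT5 p\<^esub> inv\<^bsub>UT5 p\<^esub> b"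
  have a': "a \<in> carrier (UT5 p)" and b': "b \<in> carrier (UT5 p)" using a b by (simp_all add: car_H)
  have c: "?c \<in> carrier (UT5 p)" using a' b' by simp
  have eq: "?c \<otimes>\<^bsub>UT5 p\<^esub> (b \<otimes>\<^bsub>UT5 p\<^esub> a) = a \<otimes>\<^bsub>UT5 p\<^esub> b"
  proof -
    have "inv\<^bsub>UT5 p\<^esub> b \<otimes>\<^bsub>UT5 p\<^esub> (b \<otimes>\<^bsub>UT5 p\<^esub> a) = a"
      using a' b' by (simp add: H.m_assoc[symmetric])
    then show ?thesis using a' b' by (simp add: H.m_assoc)
  qed
  have ag: "agr (Suc k) (mat_mult_mod p a b) (mat_mult_mod p b a)"
    using l by (auto simp: agr_def lev_def mm[OF a b] mm[OF b a] algebra_simps)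
  have c': "?c \<in> unitri_carrier p" using c by (simp add: car_H)
  have eq': "mat_mult_mod p ?c (mat_mult_mod p b a) = mat_mult_mod p a b"
    using eq by (simp only: mult_H)
  have "agr (Suc k) (mat_mult_mod p ?c (mat_mult_mod p b a)) (mat_mult_mod p b a)"
    using ag eq' by simp
  then show ?thesis by (rule agree[OF c' mult_car[OF b a]])
qed

end


lemma subgroup_pow_closed: "subgroup K G \<Longrightarrow> x \<in> K \<Longrightarrow> x [^]\<^bsub>G\<^esub> (n::nat) \<in> K"
  by (induction n) (auto simp: subgroup.one_closed subgroup.m_closed)

context ut begin

definition tp :: "nat \<Rightarrow> nat \<Rightarrow> int \<Rightarrow> nat \<Rightarrow> nat \<Rightarrow> int" where
  "tp i j c = mk p (if i = 1 \<and> j = 2 then c else 0) (if i = 2 \<and> j = 3 then c else 0)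
     (if i = 3 \<and> j = 4 then c else 0) (if i = 4 \<and> j = 5 then c else 0)
     (if i = 1 \<and> j = 3 then c else 0) (if i = 2 \<and> j = 4 then c else 0)
     (if i = 3 \<and> j = 5 then c else 0) (if i = 1 \<and> j = 4 then c else 0)
     (if i = 2 \<and> j = 5 then c else 0) (if i = 1 \<and> j = 5 then c else 0)"

definition prs :: "(nat \<times> nat) set" where
  "prs = {(1,2),(2,3),(3,4),(4,5),(1,3),(2,4),(3,5),(1,4),(2,5),(1,5)}"

lemma prs_iff: "(i,j) \<in> prs \<longleftrightarrow> 1 \<le> i \<and> i < j \<and> j \<le> 5"
proof
  assume "(i,j) \<in> prs" then show "1 \<le> i \<and> i < j \<and> j \<le> 5" by (auto simp: prs_def)
next
  assume a: "1 \<le> i \<and> i < j \<and> j \<le> 5"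
  then have "i \<in> {1..5}" "j \<in> {1..5}" by auto
  then have "i = 1 \<or> i = 2 \<or> i = 3 \<or> i = 4 \<or> i = 5" "j = 1 \<or> j = 2 \<or> j = 3 \<or> j = 4 \<or> j = 5"
    using idx5 by blast+
  then show "(i,j) \<in> prs" using a by (auto simp: prs_def)
qed

lemma prs_cases: "(i,j) \<in> prs \<Longrightarrow> (i = 1 \<and> j = 2) \<or> (i = 2 \<and> j = 3) \<or> (i = 3 \<and> j = 4) \<or> (i = 4 \<and> j = 5)
   \<or> (i = 1 \<and> j = 3) \<or> (i = 2 \<and> j = 4) \<or> (i = 3 \<and> j = 5) \<or> (i = 1 \<and> j = 4) \<or> (i = 2 \<and> j = 5) \<or> (i = 1 \<and> j = 5)"
  by (auto simp: prs_def)

lemma one_mod: "1 mod int p = 1" using p2 by simp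

lemma tp_car: "tp i j c \<in> unitri_carrier p"
  by (simp add: tp_def mk_car)

lemma tp_e:
  "tp i j c 1 2 = (if i = 1 \<and> j = 2 then c else 0) mod int p"
  "tp i j c 2 3 = (if i = 2 \<and> j = 3 then c else 0) mod int p"
  "tp i j c 3 4 = (if i = 3 \<and> j = 4 then c else 0) mod int p"
  "tp i j c 4 5 = (if i = 4 \<and> j = 5 then c else 0) mod int p"
  "tp i j c 1 3 = (if i = 1 \<and> j = 3 then c else 0) mod int p"
  "tp i j c 2 4 = (if i = 2 \<and> j = 4 then c else 0) mod int p"
  "tp i j c 3 5 = (if i = 3 \<and> j = 5 then c else 0) mod int p"
  "tp i j c 1 4 = (if i = 1 \<and> j = 4 then c else 0) mod int p"
  "tp i j c 2 5 = (if i = 2 \<and> j = 5 then c else 0) mod int p"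
  "tp i j c 1 5 = (if i = 1 \<and> j = 5 then c else 0) mod int p"
  by (simp_all add: tp_def mk_e)

lemma tp0: "tp i j 0 = mat_one" by (simp add: tp_def one_mk)

lemma tmat_car: assumes "(i,j) \<in> prs" shows "tmat i j \<in> unitri_carrier p"
proof -
  have ij: "1 \<le> i" "i < j" "j \<le> 5" using assms by (auto simp: prs_iff)
  have r: "tmat i j a b \<in> {0..<int p}" if "a \<in> {1..5}" "b \<in> {1..5}" for a b
    using ij p2 by (simp add: tmat_def mat_one_def)
  have o: "tmat i j a b = 0" if "\<not> (a \<in> {1..5} \<and> b \<in> {1..5})" for a b
    using ij that by (auto simp: tmat_def mat_one_def)
  have d: "tmat i j a a = 1" if "a \<in> {1..5}" for a
    using ij that by (auto simp: tmat_def mat_one_def)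
  have l: "tmat i j a b = 0" if "b < a" for a b
    using ij that by (auto simp: tmat_def mat_one_def)
  show ?thesis unfolding unitri_carrier_def using r o d l by blast
qed

lemma tmat_tp: assumes "(i,j) \<in> prs" shows "tmat i j = tp i j 1"
  by (rule mat_eqI[OF tmat_car[OF assms] tp_car]) (simp_all add: tmat_def mat_one_def tp_e one_mod)

lemma mk_mult: "mat_mult_mod p (mk p a12 a23 a34 a45 a13 a24 a35 a14 a25 a15) (mk p b12 b23 b34 b45 b13 b24 b35 b14 b25 b15)
  = mk p (a12 + b12) (a23 + b23) (a34 + b34) (a45 + b45)
     (a13 + b13 + a12 * b23) (a24 + b24 + a23 * b34) (a35 + b35 + a34 * b45)
     (a14 + b14 + a12 * b24 + a13 * b34) (a25 + b25 + a23 * b35 + a24 * b45)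
     (a15 + b15 + a12 * b25 + a13 * b35 + a14 * b45)"
  apply (rule mat_eqI)
  apply (simp_all add: mm mk_car mult_car mk_e)
  apply (rule modeqI, (rule mstrip)+, simp)+
  done

lemma mk_cong: "a12 mod int p = b12 mod int p \<Longrightarrow> a23 mod int p = b23 mod int p \<Longrightarrow>
  a34 mod int p = b34 mod int p \<Longrightarrow> a45 mod int p = b45 mod int p \<Longrightarrow>
  a13 mod int p = b13 mod int p \<Longrightarrow> a24 mod int p = b24 mod int p \<Longrightarrow>
  a35 mod int p = b35 mod int p \<Longrightarrow> a14 mod int p = b14 mod int p \<Longrightarrow>
  a25 mod int p = b25 mod int p \<Longrightarrow> a15 mod int p = b15 mod int p \<Longrightarrow>
  mk p a12 a23 a34 a45 a13 a24 a35 a14 a25 a15 = mk p b12 b23 b34 b45 b13 b24 b35 b14 b25 b15"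
  by (rule mat_eqI[OF mk_car mk_car]) (simp_all add: mk_e)

lemma tp_mult: assumes "(i,j) \<in> prs" shows "mat_mult_mod p (tp i j c) (tp i j d) = tp i j (c + d)"
  using prs_cases[OF assms] by (elim disjE conjE) (simp_all add: tp_def mk_mult)

lemma tp_pow: assumes "(i,j) \<in> prs" shows "tmat i j [^]\<^bsub>UT5 p\<^esub> n = tp i j (int n)"
proof (induction n)
  case 0 then show ?case by (simp add: one_H tp0)
next
  case (Suc n) then show ?case
    by (simp add: mult_H tmat_tp[OF assms] tp_mult[OF assms] add.commute)
qed

lemma tp_inv: assumes "(i,j) \<in> prs" shows "inv\<^bsub>UT5 p\<^esub> (tp i j c) = tp i j (- c)"
  by (rule group.inv_equality[OF UT5_group])
     (simp_all add: mult_H car_H one_H tp_mult[OF assms] tp0 tp_car)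

lemma comm_t13: "tmat 1 2 \<otimes>\<^bsub>UT5 p\<^esub> tmat 2 3 \<otimes>\<^bsub>UT5 p\<^esub> inv\<^bsub>UT5 p\<^esub> tmat 1 2 \<otimes>\<^bsub>UT5 p\<^esub> inv\<^bsub>UT5 p\<^esub> tmat 2 3 = tmat 1 3"
  apply (simp add: tmat_tp prs_def tp_inv mult_H)
  by (simp add: tp_def mk_mult)

lemma comm_t14: "tmat 1 3 \<otimes>\<^bsub>UT5 p\<^esub> tmat 3 4 \<otimes>\<^bsub>UT5 p\<^esub> inv\<^bsub>UT5 p\<^esub> tmat 1 3 \<otimes>\<^bsub>UT5 p\<^esub> inv\<^bsub>UT5 p\<^esub> tmat 3 4 = tmat 1 4"
  apply (simp add: tmat_tp prs_def tp_inv mult_H)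
  by (simp add: tp_def mk_mult)

lemma comm_t15: "tmat 1 4 \<otimes>\<^bsub>UT5 p\<^esub> tmat 4 5 \<otimes>\<^bsub>UT5 p\<^esub> inv\<^bsub>UT5 p\<^esub> tmat 1 4 \<otimes>\<^bsub>UT5 p\<^esub> inv\<^bsub>UT5 p\<^esub> tmat 4 5 = tmat 1 5"
  apply (simp add: tmat_tp prs_def tp_inv mult_H)
  by (simp add: tp_def mk_mult)

lemma comm_t35: "tmat 3 4 \<otimes>\<^bsub>UT5 p\<^esub> tmat 4 5 \<otimes>\<^bsub>UT5 p\<^esub> inv\<^bsub>UT5 p\<^esub> tmat 3 4 \<otimes>\<^bsub>UT5 p\<^esub> inv\<^bsub>UT5 p\<^esub> tmat 4 5 = tmat 3 5"
  apply (simp add: tmat_tp prs_def tp_inv mult_H)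
  by (simp add: tp_def mk_mult)

lemma lcs_car: "lcs_aux (UT5 p) m \<subseteq> carrier (UT5 p)"
proof (induction m)
  case 0 then show ?case by simp
next
  case (Suc m)
  interpret H: group "UT5 p" by (rule UT5_group)
  show ?case using Suc by (auto intro!: H.generate_incl)
qed

lemma lcs_sub: "subgroup (lcs_aux (UT5 p) m) (UT5 p)"
proof (cases m)
  case 0
  interpret H: group "UT5 p" by (rule UT5_group)
  show ?thesis using 0 H.subgroup_self by simp
next
  case (Suc k)
  interpret H: group "UT5 p" by (rule UT5_group)
  show ?thesis using Suc lcs_car[of k] by (auto intro!: H.generate_is_subgroup)
qed

lemma lcs_S: "lcs_aux (UT5 p) m \<subseteq> S (Suc m)"
proof (induction m)
  case 0 then show ?case by (auto simp: S_def lev_def car_H)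
next
  case (Suc m)
  interpret H: group "UT5 p" by (rule UT5_group)
  have "{a \<otimes>\<^bsub>UT5 p\<^esub> b \<otimes>\<^bsub>UT5 p\<^esub> inv\<^bsub>UT5 p\<^esub> a \<otimes>\<^bsub>UT5 p\<^esub> inv\<^bsub>UT5 p\<^esub> b | a b.
          a \<in> lcs_aux (UT5 p) m \<and> b \<in> carrier (UT5 p)} \<subseteq> S (Suc (Suc m))"
  proof clarify
    fix a b assume a: "a \<in> lcs_aux (UT5 p) m" and b: "b \<in> carrier (UT5 p)"
    have aS: "a \<in> S (Suc m)" using Suc a by blast
    then have ac: "a \<in> unitri_carrier p" and al: "lev (Suc m) a" by (auto simp: S_def)
    have bc: "b \<in> unitri_carrier p" using b by (simp add: car_H)
    have "a \<otimes>\<^bsub>UT5 p\<^esub> b \<otimes>\<^bsub>UT5 p\<^esub> inv\<^bsub>UT5 p\<^esub> a \<otimes>\<^bsub>UT5 p\<^esub> inv\<^bsub>UT5 p\<^esub> b \<in> carrier (UT5 p)"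
      using ac bc unfolding car_H[symmetric] by simp
    then show "a \<otimes>\<^bsub>UT5 p\<^esub> b \<otimes>\<^bsub>UT5 p\<^esub> inv\<^bsub>UT5 p\<^esub> a \<otimes>\<^bsub>UT5 p\<^esub> inv\<^bsub>UT5 p\<^esub> b \<in> S (Suc (Suc m))"
      using comm_lev[OF ac bc al] by (simp add: S_def car_H)
  qed
  then show ?case by (simp add: H.generate_subgroup_incl[OF _ S_sub])
qed

lemma comm_in_lcs: "a \<in> lcs_aux (UT5 p) m \<Longrightarrow> b \<in> carrier (UT5 p) \<Longrightarrow>
   a \<otimes>\<^bsub>UT5 p\<^esub> b \<otimes>\<^bsub>UT5 p\<^esub> inv\<^bsub>UT5 p\<^esub> a \<otimes>\<^bsub>UT5 p\<^esub> inv\<^bsub>UT5 p\<^esub> b \<in> lcs_aux (UT5 p) (Suc m)"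
  by (auto intro!: generate.incl)

lemma tcar: "(i,j) \<in> prs \<Longrightarrow> tmat i j \<in> carrier (UT5 p)"
  by (simp add: car_H tmat_car)

lemma t13_lcs: "tmat 1 3 \<in> lcs_aux (UT5 p) (Suc 0)"
  using comm_in_lcs[of "tmat 1 2" 0 "tmat 2 3"] comm_t13 tcar by (simp add: prs_def)
lemma t35_lcs: "tmat 3 5 \<in> lcs_aux (UT5 p) (Suc 0)"
  using comm_in_lcs[of "tmat 3 4" 0 "tmat 4 5"] comm_t35 tcar by (simp add: prs_def)
lemma t15_lcs1: "tmat 1 5 \<in> lcs_aux (UT5 p) (Suc 0)"
  using comm_in_lcs[of "tmat 1 4" 0 "tmat 4 5"] comm_t15 tcar by (simp add: prs_def)
lemma t14_lcs: "tmat 1 4 \<in> lcs_aux (UT5 p) (Suc (Suc 0))"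
  using comm_in_lcs[OF t13_lcs, of "tmat 3 4"] comm_t14 tcar by (simp add: prs_def)
lemma t15_lcs: "tmat 1 5 \<in> lcs_aux (UT5 p) (Suc (Suc (Suc 0)))"
  using comm_in_lcs[OF t14_lcs, of "tmat 4 5"] comm_t15 tcar by (simp add: prs_def)

lemma S4_tp: assumes "M \<in> S 4" shows "M = tp 1 5 (M 1 5)"
proof -
  have M: "M \<in> unitri_carrier p" and l: "lev 4 M" using assms by (auto simp: S_def)
  show ?thesis by (rule mat_eqI[OF M tp_car]) (use l in \<open>simp_all add: tp_e lev_def modid[OF M]\<close>)
qed

lemma S4_gen: "S 4 \<subseteq> generate (UT5 p) {tmat 1 5}"
proof
  fix M assume M: "M \<in> S 4"
  interpret H: group "UT5 p" by (rule UT5_group)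
  have c: "M \<in> unitri_carrier p" using M by (simp add: S_def)
  have "0 \<le> M 1 5" using carD_rng[OF c, of 1 5] by simp
  then have "M = tp 1 5 (int (nat (M 1 5)))" using S4_tp[OF M] by simp
  also have "\<dots> = tmat 1 5 [^]\<^bsub>UT5 p\<^esub> (nat (M 1 5))" by (simp add: tp_pow prs_def)
  also have "\<dots> \<in> generate (UT5 p) {tmat 1 5}"
    by (rule subgroup_pow_closed[OF H.generate_is_subgroup]) (auto simp: tcar prs_def intro: generate.incl)
  finally show "M \<in> generate (UT5 p) {tmat 1 5}" .
qed

lemma gamma4: "gamma (UT5 p) 4 = generate (UT5 p) {tmat 1 5}" "S 4 = generate (UT5 p) {tmat 1 5}"
proof -
  interpret H: group "UT5 p" by (rule UT5_group)
  have g: "gamma (UT5 p) 4 = lcs_aux (UT5 p) (Suc (Suc (Suc 0)))" by (simp add: gamma_def numeral_eq_Suc)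
  have 1: "generate (UT5 p) {tmat 1 5} \<subseteq> lcs_aux (UT5 p) (Suc (Suc (Suc 0)))"
    using H.generate_subgroup_incl[OF _ lcs_sub] t15_lcs by blast
  have e4: "(4::nat) = Suc (Suc (Suc (Suc 0)))" by simp
  have 2: "lcs_aux (UT5 p) (Suc (Suc (Suc 0))) \<subseteq> S 4" unfolding e4 by (rule lcs_S)
  show "gamma (UT5 p) 4 = generate (UT5 p) {tmat 1 5}" using 1 2 S4_gen g by blast
  show "S 4 = generate (UT5 p) {tmat 1 5}" using 1 2 S4_gen g by blast
qed

lemma gamma2: "gamma (UT5 p) 2 = lcs_aux (UT5 p) (Suc 0)"
  by (simp add: gamma_def numeral_eq_Suc)

lemma S4_sub_gamma2: "S 4 \<subseteq> gamma (UT5 p) 2"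
proof -
  interpret H: group "UT5 p" by (rule UT5_group)
  show ?thesis unfolding gamma4(2) gamma2
    using H.generate_subgroup_incl[OF _ lcs_sub] t15_lcs1 by blast
qed

lemma gamma2_S2: "gamma (UT5 p) 2 \<subseteq> S 2"
proof -
  have e2: "(2::nat) = Suc (Suc 0)" by simp
  have "lcs_aux (UT5 p) (Suc 0) \<subseteq> S 2" unfolding e2 by (rule lcs_S)
  then show ?thesis unfolding gamma2 .
qed

end


context ut begin

definition Z7 :: "(nat \<Rightarrow> nat \<Rightarrow> int) \<Rightarrow> bool" where
  "Z7 C \<longleftrightarrow> C 1 2 = 0 \<and> C 2 3 = 0 \<and> C 3 4 = 0 \<and> C 4 5 = 0 \<and> C 1 3 = 0 \<and> C 2 4 = 0 \<and> C 3 5 = 0"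

lemma Z7_mk: assumes C: "C \<in> unitri_carrier p" and z: "Z7 C"
  shows "C = mk p 0 0 0 0 0 0 0 (C 1 4) (C 2 5) (C 1 5)"
  by (rule mat_eqI[OF C mk_car]) (use z in \<open>simp_all add: Z7_def mk_e modid[OF C]\<close>)

lemma ncomm: assumes C: "C \<in> unitri_carrier p" and D: "D \<in> unitri_carrier p" and zC: "Z7 C" and zD: "Z7 D"
  shows "mat_mult_mod p (mat_mult_mod p (tmat 1 3) C) (mat_mult_mod p (tmat 3 5) D)
      \<noteq> mat_mult_mod p (mat_mult_mod p (tmat 3 5) D) (mat_mult_mod p (tmat 1 3) C)"
proof
  assume e: "mat_mult_mod p (mat_mult_mod p (tmat 1 3) C) (mat_mult_mod p (tmat 3 5) D)
      = mat_mult_mod p (mat_mult_mod p (tmat 3 5) D) (mat_mult_mod p (tmat 1 3) C)"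
  have "mat_mult_mod p (mat_mult_mod p (tmat 1 3) C) (mat_mult_mod p (tmat 3 5) D) 1 5
      = mat_mult_mod p (mat_mult_mod p (tmat 3 5) D) (mat_mult_mod p (tmat 1 3) C) 1 5"
    using e by simp
  moreover obtain c14 c25 c15 where hC: "C = mk p 0 0 0 0 0 0 0 c14 c25 c15" using Z7_mk[OF C zC] by blast
  moreover obtain d14 d25 d15 where hD: "D = mk p 0 0 0 0 0 0 0 d14 d25 d15" using Z7_mk[OF D zD] by blast
  ultimately have "(c15 + d15 + 1) mod int p = (d15 + c15) mod int p"
    by (simp add: tmat_tp prs_def tp_def mk_mult mk_e)
  then have "int p dvd 1" by (simp add: mod_eq_dvd_iff)
  then show False using p2 by simp
qed


lemma S4_central: assumes M: "M \<in> S 4" and N: "N \<in> unitri_carrier p"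
  shows "mat_mult_mod p M N = mat_mult_mod p N M"
proof -
  have Mc: "M \<in> unitri_carrier p" and l: "lev 4 M" using M by (auto simp: S_def)
  show ?thesis by (rule mat_eqI[OF mult_car[OF Mc N] mult_car[OF N Mc]])
     (use l in \<open>simp_all add: mm[OF Mc N] mm[OF N Mc] lev_def algebra_simps\<close>)
qed

lemma Zp_car: "carrier (integer_mod_group p) = {0..<int p}"
  using p2 by (simp add: carrier_integer_mod_group)

lemma G_group: "group (Ggrp p)"
  unfolding Ggrp_def by (intro DirProd_group group_integer_mod_group UT5_group)

lemma G_car: "carrier (Ggrp p) = ({0..<int p} \<times> {0..<int p}) \<times> unitri_carrier p"
  by (simp add: Ggrp_def Zp_car car_H)

lemma G_mult: "((a1,b1),M) \<otimes>\<^bsub>Ggrp p\<^esub> ((a2,b2),N) = (((a1 + a2) mod int p, (b1 + b2) mod int p), mat_mult_mod p M N)"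
  by (simp add: Ggrp_def mult_H)

lemma G_mult': "g \<otimes>\<^bsub>Ggrp p\<^esub> h = (((fst (fst g) + fst (fst h)) mod int p, (snd (fst g) + snd (fst h)) mod int p),
     mat_mult_mod p (snd g) (snd h))"
  by (cases g, cases h) (auto simp: G_mult)

lemma G_one: "\<one>\<^bsub>Ggrp p\<^esub> = ((0,0), mat_one)"
  by (simp add: Ggrp_def one_H)

lemma embH_car: "M \<in> unitri_carrier p \<Longrightarrow> embH M \<in> carrier (Ggrp p)"
  using p2 by (simp add: embH_def G_car)

lemma embH_mult: "embH M \<otimes>\<^bsub>Ggrp p\<^esub> embH N = embH (mat_mult_mod p M N)"
  by (simp add: embH_def G_mult)

lemma embH_hom: "embH \<in> hom (UT5 p) (Ggrp p)"
  by (auto simp: hom_def car_H embH_car mult_H embH_mult)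

lemma snd_hom: "snd \<in> hom (Ggrp p) (UT5 p)"
  by (auto simp: hom_def G_car car_H mult_H G_mult')

lemma K_eq: "Kgrp p = {(0,0)} \<times> S 4"
  by (auto simp: Kgrp_def gamma4 embH_def)

lemma A_eq: "Agrp p = {(0,0)} \<times> gamma (UT5 p) 2"
  by (auto simp: Agrp_def embH_def)

lemma triv_Zp2: "subgroup {(0,0)} (integer_mod_group p \<times>\<times> integer_mod_group p)"
proof -
  have g: "group (integer_mod_group p \<times>\<times> integer_mod_group p)"
    by (intro DirProd_group group_integer_mod_group)
  show ?thesis using group.triv_subgroup[OF g] by simp
qed

lemma K_sub: "subgroup (Kgrp p) (Ggrp p)"
  unfolding K_eq Ggrp_def
  by (rule DirProd_subgroups[OF _ triv_Zp2 UT5_group S_sub]) (intro DirProd_group group_integer_mod_group)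

lemma A_sub: "subgroup (Agrp p) (Ggrp p)"
  unfolding A_eq Ggrp_def gamma2
  by (rule DirProd_subgroups[OF _ triv_Zp2 UT5_group lcs_sub]) (intro DirProd_group group_integer_mod_group)

lemma K_A: "Kgrp p \<subseteq> Agrp p"
  using S4_sub_gamma2 by (auto simp: K_eq A_eq)

lemma K_central: assumes z: "z \<in> Kgrp p" and g: "g \<in> carrier (Ggrp p)"
  shows "z \<otimes>\<^bsub>Ggrp p\<^esub> g = g \<otimes>\<^bsub>Ggrp p\<^esub> z"
proof -
  obtain M where zM: "z = ((0,0),M)" and M: "M \<in> S 4" using z by (auto simp: K_eq)
  obtain a b N where gN: "g = ((a,b),N)" and ab: "a \<in> {0..<int p}" "b \<in> {0..<int p}" and N: "N \<in> unitri_carrier p"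
    using g by (auto simp: G_car)
  show ?thesis using ab by (simp add: zM gN G_mult S4_central[OF M N])
qed

lemma K_center: "Kgrp p \<subseteq> center_of (Ggrp p)"
  using K_central K_sub subgroup.subset by (fastforce simp: center_of_def)

lemma K_normal: "Kgrp p \<lhd> Ggrp p"
proof (rule group.normalI[OF G_group K_sub], intro ballI)
  fix x assume x: "x \<in> carrier (Ggrp p)"
  show "Kgrp p #>\<^bsub>Ggrp p\<^esub> x = x <#\<^bsub>Ggrp p\<^esub> Kgrp p"
    unfolding r_coset_def l_coset_def using K_central[OF _ x] by auto
qed

end


context ut begin

lemma coset_agr: assumes X: "U \<in> unitri_carrier p" and Y: "V \<in> unitri_carrier p" and a: "agr 4 U V"
  shows "Kgrp p #>\<^bsub>Ggrp p\<^esub> embH U = Kgrp p #>\<^bsub>Ggrp p\<^esub> embH V"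
proof -
  interpret G: group "Ggrp p" by (rule G_group)
  let ?z = "mat_mult_mod p U (minv V)"
  have zc: "?z \<in> unitri_carrier p" by (simp add: mult_car X minv_car)
  have zY: "mat_mult_mod p ?z V = U" by (simp add: assoc X minv_car Y minv_l r_one)
  have "lev 4 ?z" using agree[OF zc Y] a zY by simp
  then have "embH ?z \<in> Kgrp p" using zc by (simp add: K_eq embH_def S_def)
  then have "embH ?z \<otimes>\<^bsub>Ggrp p\<^esub> embH V \<in> Kgrp p #>\<^bsub>Ggrp p\<^esub> embH V"
    by (rule G.rcosI) (simp_all add: K_sub subgroup.subset embH_car Y)
  then have "embH U \<in> Kgrp p #>\<^bsub>Ggrp p\<^esub> embH V" using zY by (simp add: embH_mult)
  then show ?thesis using G.repr_independence[OF _ embH_car[OF Y] K_sub] by simp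
qed

lemma AK_comm: "comm_group ((Ggrp p\<lparr>carrier := Agrp p\<rparr>) Mod Kgrp p)"
proof -
  let ?GA = "Ggrp p\<lparr>carrier := Agrp p\<rparr>"
  interpret G: group "Ggrp p" by (rule G_group)
  have GA: "group ?GA" by (rule subgroup.subgroup_is_group[OF A_sub G_group])
  have Ks: "subgroup (Kgrp p) ?GA" by (rule G.subgroup_incl[OF K_sub A_sub K_A])
  have N: "Kgrp p \<lhd> ?GA"
  proof (rule group.normalI[OF GA Ks], intro ballI)
    fix x assume "x \<in> carrier ?GA"
    then have x: "x \<in> carrier (Ggrp p)" using A_sub subgroup.subset by force
    show "Kgrp p #>\<^bsub>?GA\<^esub> x = x <#\<^bsub>?GA\<^esub> Kgrp p"
      unfolding r_coset_def l_coset_def using K_central[OF _ x] by auto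
  qed
  interpret N: normal "Kgrp p" ?GA by (rule N)
  have key: "Kgrp p #>\<^bsub>?GA\<^esub> (a \<otimes>\<^bsub>?GA\<^esub> b) = Kgrp p #>\<^bsub>?GA\<^esub> (b \<otimes>\<^bsub>?GA\<^esub> a)"
    if a: "a \<in> Agrp p" and b: "b \<in> Agrp p" for a b
  proof -
    obtain M where aM: "a = embH M" and M: "M \<in> gamma (UT5 p) 2" using a by (auto simp: A_eq embH_def)
    obtain N where bN: "b = embH N" and N: "N \<in> gamma (UT5 p) 2" using b by (auto simp: A_eq embH_def)
    have Mc: "M \<in> unitri_carrier p" and Ml: "lev 2 M" using M gamma2_S2 by (auto simp: S_def)
    have Nc: "N \<in> unitri_carrier p" and Nl: "lev 2 N" using N gamma2_S2 by (auto simp: S_def)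
    have ag: "agr 4 (mat_mult_mod p M N) (mat_mult_mod p N M)"
      using Ml Nl by (auto simp: agr_def lev_def mm[OF Mc Nc] mm[OF Nc Mc] algebra_simps)
    show ?thesis using coset_agr[OF mult_car[OF Mc Nc] mult_car[OF Nc Mc] ag]
      by (simp add: aM bN embH_mult r_coset_def)
  qed
  show ?thesis
  proof (rule group.group_comm_groupI[OF N.factorgroup_is_group])
    fix Q1 Q2 assume Q1: "Q1 \<in> carrier (?GA Mod Kgrp p)" and Q2: "Q2 \<in> carrier (?GA Mod Kgrp p)"
    obtain a where a: "a \<in> Agrp p" and Q1a: "Q1 = Kgrp p #>\<^bsub>?GA\<^esub> a" using Q1 by (auto simp: FactGroup_def RCOSETS_def)
    obtain b where b: "b \<in> Agrp p" and Q2b: "Q2 = Kgrp p #>\<^bsub>?GA\<^esub> b" using Q2 by (auto simp: FactGroup_def RCOSETS_def)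
    have "Q1 \<otimes>\<^bsub>?GA Mod Kgrp p\<^esub> Q2 = Kgrp p #>\<^bsub>?GA\<^esub> (a \<otimes>\<^bsub>?GA\<^esub> b)"
      using N.rcos_sum[of a b] a b by (simp add: Q1a Q2b)
    also have "\<dots> = Kgrp p #>\<^bsub>?GA\<^esub> (b \<otimes>\<^bsub>?GA\<^esub> a)" by (rule key[OF a b])
    also have "\<dots> = Q2 \<otimes>\<^bsub>?GA Mod Kgrp p\<^esub> Q1"
      using N.rcos_sum[of b a] a b by (simp add: Q1a Q2b)
    finally show "Q1 \<otimes>\<^bsub>?GA Mod Kgrp p\<^esub> Q2 = Q2 \<otimes>\<^bsub>?GA Mod Kgrp p\<^esub> Q1" .
  qed
qed

lemma Z7_one: "Z7 mat_one" by (simp add: Z7_def one_e)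

lemma t13_t35_ne: "mat_mult_mod p (tmat 1 3) (tmat 3 5) \<noteq> mat_mult_mod p (tmat 3 5) (tmat 1 3)"
  using ncomm[OF one_car one_car Z7_one Z7_one] tmat_car r_one by (simp add: prs_def)

lemma tG13_A: "tG 1 3 \<in> Agrp p" using t13_lcs by (simp add: A_eq gamma2 tG_def embH_def)
lemma tG35_A: "tG 3 5 \<in> Agrp p" using t35_lcs by (simp add: A_eq gamma2 tG_def embH_def)

lemma A_noncomm: "\<not> comm_group (Ggrp p\<lparr>carrier := Agrp p\<rparr>)"
proof
  assume c: "comm_group (Ggrp p\<lparr>carrier := Agrp p\<rparr>)"
  have "tG 1 3 \<otimes>\<^bsub>Ggrp p\<lparr>carrier := Agrp p\<rparr>\<^esub> tG 3 5 = tG 3 5 \<otimes>\<^bsub>Ggrp p\<lparr>carrier := Agrp p\<rparr>\<^esub> tG 1 3"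
    using comm_monoid.m_comm[OF comm_group.axioms(1)[OF c]] tG13_A tG35_A by simp
  then have "mat_mult_mod p (tmat 1 3) (tmat 3 5) = mat_mult_mod p (tmat 3 5) (tmat 1 3)"
    by (simp add: tG_def embH_mult, simp add: embH_def)
  then show False using t13_t35_ne by simp
qed

end


context ut begin

definition rep :: "((int \<times> int) \<times> (nat \<Rightarrow> nat \<Rightarrow> int)) set \<Rightarrow> (int \<times> int) \<times> (nat \<Rightarrow> nat \<Rightarrow> int)" where
  "rep C = (SOME g. g \<in> C)"

definition Tm :: "int \<Rightarrow> int \<Rightarrow> nat \<Rightarrow> nat \<Rightarrow> int" where
  "Tm a b = mat_mult_mod p (tp 1 3 a) (tp 3 5 b)"

definition psi :: "((int \<times> int) \<times> (nat \<Rightarrow> nat \<Rightarrow> int)) set \<Rightarrow> ((int \<times> int) \<times> (nat \<Rightarrow> nat \<Rightarrow> int)) set" where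
  "psi C = (if C \<in> carrier (Ggrp p Mod Kgrp p)
     then Kgrp p #>\<^bsub>Ggrp p\<^esub> embH (Tm (fst (fst (rep C))) (snd (fst (rep C)))) else undefined)"

lemma rep_fst: assumes g: "g \<in> carrier (Ggrp p)" shows "fst (rep (Kgrp p #>\<^bsub>Ggrp p\<^esub> g)) = fst g"
proof -
  interpret G: group "Ggrp p" by (rule G_group)
  have "g \<in> Kgrp p #>\<^bsub>Ggrp p\<^esub> g" by (rule G.rcos_self[OF g K_sub])
  then have "rep (Kgrp p #>\<^bsub>Ggrp p\<^esub> g) \<in> Kgrp p #>\<^bsub>Ggrp p\<^esub> g" unfolding rep_def by (rule someI)
  then obtain k where k: "k \<in> Kgrp p" and e: "rep (Kgrp p #>\<^bsub>Ggrp p\<^esub> g) = k \<otimes>\<^bsub>Ggrp p\<^esub> g"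
    by (auto simp: r_coset_def)
  obtain M where kM: "k = ((0,0),M)" using k by (auto simp: K_eq)
  obtain a b N where gN: "g = ((a,b),N)" and ab: "a \<in> {0..<int p}" "b \<in> {0..<int p}"
    using g by (auto simp: G_car)
  have "fst (k \<otimes>\<^bsub>Ggrp p\<^esub> g) = fst g" using ab by (simp add: kM gN G_mult)
  then show ?thesis using e by simp
qed

lemma psi_val: "g \<in> carrier (Ggrp p) \<Longrightarrow>
   psi (Kgrp p #>\<^bsub>Ggrp p\<^esub> g) = Kgrp p #>\<^bsub>Ggrp p\<^esub> embH (Tm (fst (fst g)) (snd (fst g)))"
  by (simp add: psi_def rep_fst carrier_FactGroup)

lemma tp_mod: "tp i j (c mod int p) = tp i j c"
  unfolding tp_def by (rule mk_cong) simp_all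

lemma Tm_car: "Tm a b \<in> unitri_carrier p" by (simp add: Tm_def mult_car tp_car)

lemma Tm_mod: "Tm (a mod int p) (b mod int p) = Tm a b" by (simp add: Tm_def tp_mod)

lemma Tm_agr: "agr 4 (mat_mult_mod p (Tm a1 b1) (Tm a2 b2)) (Tm (a1 + a2) (b1 + b2))"
  by (simp add: Tm_def tp_def mk_mult agr_def mk_e)

lemma psi_hom: "psi \<in> hom (Ggrp p Mod Kgrp p) (Ggrp p Mod Kgrp p)"
proof (rule homI)
  interpret G: group "Ggrp p" by (rule G_group)
  interpret N: normal "Kgrp p" "Ggrp p" by (rule K_normal)
  fix Q1 assume "Q1 \<in> carrier (Ggrp p Mod Kgrp p)"
  then obtain g where g: "g \<in> carrier (Ggrp p)" and Q1g: "Q1 = Kgrp p #>\<^bsub>Ggrp p\<^esub> g"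
    by (auto simp: carrier_FactGroup)
  show "psi Q1 \<in> carrier (Ggrp p Mod Kgrp p)"
    using g by (simp add: Q1g psi_val carrier_FactGroup embH_car Tm_car)
next
  interpret G: group "Ggrp p" by (rule G_group)
  interpret N: normal "Kgrp p" "Ggrp p" by (rule K_normal)
  fix Q1 Q2 assume "Q1 \<in> carrier (Ggrp p Mod Kgrp p)" "Q2 \<in> carrier (Ggrp p Mod Kgrp p)"
  then obtain g h where g: "g \<in> carrier (Ggrp p)" and Q1g: "Q1 = Kgrp p #>\<^bsub>Ggrp p\<^esub> g"
    and h: "h \<in> carrier (Ggrp p)" and Q2h: "Q2 = Kgrp p #>\<^bsub>Ggrp p\<^esub> h"
    by (auto simp: carrier_FactGroup)
  let ?T1 = "Tm (fst (fst g)) (snd (fst g))" and ?T2 = "Tm (fst (fst h)) (snd (fst h))"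
  have e: "Q1 \<otimes>\<^bsub>Ggrp p Mod Kgrp p\<^esub> Q2 = Kgrp p #>\<^bsub>Ggrp p\<^esub> (g \<otimes>\<^bsub>Ggrp p\<^esub> h)"
    using N.rcos_sum[OF g h] by (simp add: Q1g Q2h)
  have "psi (Q1 \<otimes>\<^bsub>Ggrp p Mod Kgrp p\<^esub> Q2) = Kgrp p #>\<^bsub>Ggrp p\<^esub>
     embH (Tm (fst (fst (g \<otimes>\<^bsub>Ggrp p\<^esub> h))) (snd (fst (g \<otimes>\<^bsub>Ggrp p\<^esub> h))))"
    unfolding e by (rule psi_val[OF G.m_closed[OF g h]])
  also have "\<dots> = Kgrp p #>\<^bsub>Ggrp p\<^esub> embH (Tm (fst (fst g) + fst (fst h)) (snd (fst g) + snd (fst h)))"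
    by (simp add: G_mult' Tm_mod)
  also have "\<dots> = Kgrp p #>\<^bsub>Ggrp p\<^esub> embH (mat_mult_mod p ?T1 ?T2)"
    by (rule coset_agr[OF mult_car[OF Tm_car Tm_car] Tm_car Tm_agr, symmetric])
  also have "\<dots> = (Kgrp p #>\<^bsub>Ggrp p\<^esub> embH ?T1) <#>\<^bsub>Ggrp p\<^esub> (Kgrp p #>\<^bsub>Ggrp p\<^esub> embH ?T2)"
    by (simp add: N.rcos_sum embH_car Tm_car embH_mult)
  also have "\<dots> = psi Q1 \<otimes>\<^bsub>Ggrp p Mod Kgrp p\<^esub> psi Q2"
    using g h by (simp add: Q1g Q2h psi_val)
  finally show "psi (Q1 \<otimes>\<^bsub>Ggrp p Mod Kgrp p\<^esub> Q2) = psi Q1 \<otimes>\<^bsub>Ggrp p Mod Kgrp p\<^esub> psi Q2" .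
qed

lemma xG_car: "xG \<in> carrier (Ggrp p)" using p2 one_car by (simp add: xG_def G_car)
lemma yG_car: "yG \<in> carrier (Ggrp p)" using p2 one_car by (simp add: yG_def G_car)
lemma tG_car: "(i,j) \<in> prs \<Longrightarrow> tG i j \<in> carrier (Ggrp p)" by (simp add: tG_def embH_car tmat_car)

lemma K_coset_one: "Kgrp p #>\<^bsub>Ggrp p\<^esub> \<one>\<^bsub>Ggrp p\<^esub> = Kgrp p"
  using group.coset_mult_one[OF G_group] K_sub subgroup.subset by blast

lemma psi_x: "psi (Kgrp p #>\<^bsub>Ggrp p\<^esub> xG) = Kgrp p #>\<^bsub>Ggrp p\<^esub> tG 1 3"
  using xG_car by (simp add: psi_val xG_def Tm_def tp0 r_one tp_car tG_def tmat_tp prs_def)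

lemma psi_y: "psi (Kgrp p #>\<^bsub>Ggrp p\<^esub> yG) = Kgrp p #>\<^bsub>Ggrp p\<^esub> tG 3 5"
  using yG_car by (simp add: psi_val yG_def Tm_def tp0 l_one tp_car tG_def tmat_tp prs_def)

lemma psi_t: "(i,j) \<in> prs \<Longrightarrow> psi (Kgrp p #>\<^bsub>Ggrp p\<^esub> tG i j) = Kgrp p"
  using tG_car K_coset_one
  by (simp add: psi_val tG_def embH_def Tm_def tp0 l_one one_car G_one)

lemma psi_ext: "psi \<in> extensional (carrier (Ggrp p Mod Kgrp p))"
  by (simp add: psi_def extensional_def)

lemma tp_pow_mod: assumes "(i,j) \<in> prs" shows "tp i j c = tmat i j [^]\<^bsub>UT5 p\<^esub> nat (c mod int p)"
proof -
  have "tp i j c = tp i j (int (nat (c mod int p)))" using p0 by (simp add: tp_mod)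
  also have "\<dots> = tmat i j [^]\<^bsub>UT5 p\<^esub> nat (c mod int p)" by (rule tp_pow[OF assms, symmetric])
  finally show ?thesis .
qed

lemma Tm_gamma2: "Tm a b \<in> gamma (UT5 p) 2"
proof -
  have s: "subgroup (gamma (UT5 p) 2) (UT5 p)" unfolding gamma2 by (rule lcs_sub)
  have 1: "tp 1 3 a \<in> gamma (UT5 p) 2"
    using subgroup_pow_closed[OF s, of "tmat 1 3"] t13_lcs tp_pow_mod[of 1 3 a] by (simp add: gamma2 prs_def)
  have 2: "tp 3 5 b \<in> gamma (UT5 p) 2"
    using subgroup_pow_closed[OF s, of "tmat 3 5"] t35_lcs tp_pow_mod[of 3 5 b] by (simp add: gamma2 prs_def)
  show ?thesis using subgroup.m_closed[OF s 1 2] by (simp add: Tm_def mult_H)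
qed

lemma psi_img: "psi ` carrier (Ggrp p Mod Kgrp p) \<subseteq> {Kgrp p #>\<^bsub>Ggrp p\<^esub> a | a. a \<in> Agrp p}"
proof
  fix Y assume "Y \<in> psi ` carrier (Ggrp p Mod Kgrp p)"
  then obtain g where g: "g \<in> carrier (Ggrp p)" and Y: "Y = psi (Kgrp p #>\<^bsub>Ggrp p\<^esub> g)"
    by (auto simp: carrier_FactGroup)
  have "embH (Tm (fst (fst g)) (snd (fst g))) \<in> Agrp p" using Tm_gamma2 by (simp add: Agrp_def)
  moreover have "Y = Kgrp p #>\<^bsub>Ggrp p\<^esub> embH (Tm (fst (fst g)) (snd (fst g)))" using g by (simp add: Y psi_val)
  ultimately show "Y \<in> {Kgrp p #>\<^bsub>Ggrp p\<^esub> a | a. a \<in> Agrp p}" by blast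
qed

end


lemma (in group) core_alg:
  assumes t: "t \<in> carrier G" and c: "c \<in> carrier G" and h: "h \<in> carrier G"
    and z: "z \<in> carrier G" and b: "b \<in> carrier G"
    and zc: "\<And>x. x \<in> carrier G \<Longrightarrow> z \<otimes> x = x \<otimes> z"
    and bc: "\<And>x. x \<in> carrier G \<Longrightarrow> b \<otimes> x = x \<otimes> b"
    and e: "(z \<otimes> t) \<otimes> h \<otimes> inv (z \<otimes> t) = (t \<otimes> c) \<otimes> h \<otimes> inv (t \<otimes> c) \<otimes> b"
  shows "c \<otimes> h = inv b \<otimes> (h \<otimes> c)"
proof -
  have e1: "(z \<otimes> t) \<otimes> h \<otimes> inv (z \<otimes> t) = t \<otimes> (h \<otimes> inv t)"
  proof -
    have "(z \<otimes> t) \<otimes> h \<otimes> inv (z \<otimes> t) = z \<otimes> (t \<otimes> h \<otimes> inv t) \<otimes> inv z"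
      using t h z by (simp add: inv_mult_group m_assoc)
    also have "\<dots> = (t \<otimes> h \<otimes> inv t) \<otimes> z \<otimes> inv z" using zc t h z by simp
    also have "\<dots> = t \<otimes> (h \<otimes> inv t)" using t h z by (simp add: m_assoc)
    finally show ?thesis .
  qed
  have e2: "(t \<otimes> c) \<otimes> h \<otimes> inv (t \<otimes> c) \<otimes> b = t \<otimes> ((c \<otimes> h \<otimes> inv c \<otimes> b) \<otimes> inv t)"
  proof -
    have "(t \<otimes> c) \<otimes> h \<otimes> inv (t \<otimes> c) \<otimes> b = t \<otimes> (c \<otimes> h \<otimes> inv c) \<otimes> (inv t \<otimes> b)"
      using t h c b by (simp add: inv_mult_group m_assoc)
    also have "inv t \<otimes> b = b \<otimes> inv t" using bc t by simp
    finally show ?thesis using t h c b by (simp add: m_assoc)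
  qed
  have "h \<otimes> inv t = (c \<otimes> h \<otimes> inv c \<otimes> b) \<otimes> inv t" using e e1 e2 t h c b by simp
  then have hh: "h = c \<otimes> h \<otimes> inv c \<otimes> b" using t h c b by simp
  have "inv b \<otimes> (h \<otimes> c) = inv b \<otimes> ((c \<otimes> h \<otimes> inv c \<otimes> b) \<otimes> c)" using hh by simp
  also have "\<dots> = inv b \<otimes> ((c \<otimes> h \<otimes> inv c) \<otimes> (b \<otimes> c))" using t h c b by (simp add: m_assoc)
  also have "b \<otimes> c = c \<otimes> b" using bc c by simp
  also have "inv b \<otimes> ((c \<otimes> h \<otimes> inv c) \<otimes> (c \<otimes> b)) = inv b \<otimes> ((c \<otimes> h) \<otimes> b)"
    using h c b by (simp add: m_assoc) (simp add: m_assoc[symmetric])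
  also have "(c \<otimes> h) \<otimes> b = b \<otimes> (c \<otimes> h)" using bc c h by simp
  also have "inv b \<otimes> (b \<otimes> (c \<otimes> h)) = c \<otimes> h" using b c h by (simp add: m_assoc[symmetric])
  finally show ?thesis by simp
qed

context ut begin

lemma S4_agr: "B \<in> S 4 \<Longrightarrow> V \<in> unitri_carrier p \<Longrightarrow> agr 4 (mat_mult_mod p B V) V"
  by (auto simp: S_def lev_def agr_def mm modid)

lemma S4_Z7: "M \<in> S 4 \<Longrightarrow> Z7 M" by (simp add: S_def lev_def Z7_def)

lemma zz: assumes C: "C \<in> unitri_carrier p" and ij: "1 \<le> i" "i \<le> 5" "1 \<le> j" "j \<le> 5"
  and e: "(y + C i j) mod int p = y mod int p" shows "C i j = 0"
proof -
  have r: "0 \<le> C i j" "C i j < int p" using carD_rng[OF C ij] by auto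
  from e have "int p dvd C i j" by (simp add: mod_eq_dvd_iff)
  show ?thesis
  proof (rule ccontr)
    assume "C i j \<noteq> 0" then have "0 < C i j" using r by simp
    then have "int p \<le> C i j" by (rule zdvd_imp_le[OF \<open>int p dvd C i j\<close>])
    then show False using r by simp
  qed
qed

lemma coreH: assumes C: "C \<in> unitri_carrier p"
  and h: "\<And>M. M \<in> unitri_carrier p \<Longrightarrow> \<exists>B\<in>S 4. mat_mult_mod p C M = mat_mult_mod p B (mat_mult_mod p M C)"
  shows "Z7 C"
proof -
  have ag: "agr 4 (mat_mult_mod p C M) (mat_mult_mod p M C)" if M: "M \<in> unitri_carrier p" for M
  proof -
    obtain B where B: "B \<in> S 4" and e: "mat_mult_mod p C M = mat_mult_mod p B (mat_mult_mod p M C)"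
      using h[OF M] by blast
    show ?thesis using S4_agr[OF B mult_car[OF M C]] e by simp
  qed
  note e12 = ag[OF tp_car[of 1 2 1], unfolded agr_def]
  note e23 = ag[OF tp_car[of 2 3 1], unfolded agr_def]
  note e34 = ag[OF tp_car[of 3 4 1], unfolded agr_def]
  note e45 = ag[OF tp_car[of 4 5 1], unfolded agr_def]
  note mC = mm[OF C tp_car] and Cm = mm[OF tp_car C]
  note simps = mC Cm tp_e one_mod
  have "(C 1 3 + C 2 3) mod int p = C 1 3 mod int p" using e12 by (simp add: simps)
  then have z23: "C 2 3 = 0" using zz[OF C, where i=2 and j=3 and y="C 1 3"] by simp
  have "(C 1 4 + C 2 4) mod int p = C 1 4 mod int p" using e12 by (simp add: simps)
  then have z24: "C 2 4 = 0" using zz[OF C, where i=2 and j=4 and y="C 1 4"] by simp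
  have "(C 1 3 + C 1 2) mod int p = C 1 3 mod int p" using e23 by (simp add: simps)
  then have z12: "C 1 2 = 0" using zz[OF C, where i=1 and j=2 and y="C 1 3"] by simp
  have "(C 2 5 + C 3 5) mod int p = C 2 5 mod int p" using e23 by (simp add: simps)
  then have z35: "C 3 5 = 0" using zz[OF C, where i=3 and j=5 and y="C 2 5"] by simp
  have "(C 1 4 + C 1 3) mod int p = C 1 4 mod int p" using e34 by (simp add: simps)
  then have z13: "C 1 3 = 0" using zz[OF C, where i=1 and j=3 and y="C 1 4"] by simp
  have "(C 3 5 + C 4 5) mod int p = C 3 5 mod int p" using e34 by (simp add: simps)
  then have z45: "C 4 5 = 0" using zz[OF C, where i=4 and j=5 and y="C 3 5"] by simp
  have "(C 3 5 + C 3 4) mod int p = C 3 5 mod int p" using e45 by (simp add: simps)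
  then have z34: "C 3 4 = 0" using zz[OF C, where i=3 and j=4 and y="C 3 5"] by simp
  show ?thesis using z12 z23 z34 z45 z13 z24 z35 by (simp add: Z7_def)
qed

end


context ut begin

lemma xy_comm: "xG \<otimes>\<^bsub>Ggrp p\<^esub> yG = yG \<otimes>\<^bsub>Ggrp p\<^esub> xG"
  by (simp add: xG_def yG_def G_mult add.commute)

lemma K_elem: "k \<in> Kgrp p \<Longrightarrow> k = ((0,0), snd k) \<and> snd k \<in> S 4"
  by (auto simp: K_eq)

lemma snd_G_mult: "snd (g \<otimes>\<^bsub>Ggrp p\<^esub> h) = mat_mult_mod p (snd g) (snd h)"
  by (simp add: G_mult')

lemma S4_car: "M \<in> S 4 \<Longrightarrow> M \<in> unitri_carrier p" by (simp add: S_def)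

lemma final_contra:
  assumes C: "C \<in> unitri_carrier p" and D: "D \<in> unitri_carrier p" and zC: "Z7 C" and zD: "Z7 D"
    and phi: "\<phi> \<in> hom (Ggrp p) (Ggrp p)"
    and ex: "snd (\<phi> xG) = mat_mult_mod p (tmat 1 3) C" and ey: "snd (\<phi> yG) = mat_mult_mod p (tmat 3 5) D"
  shows False
proof -
  have "\<phi> xG \<otimes>\<^bsub>Ggrp p\<^esub> \<phi> yG = \<phi> yG \<otimes>\<^bsub>Ggrp p\<^esub> \<phi> xG"
    using xy_comm hom_mult[OF phi xG_car yG_car] hom_mult[OF phi yG_car xG_car] by simp
  then have "snd (\<phi> xG \<otimes>\<^bsub>Ggrp p\<^esub> \<phi> yG) = snd (\<phi> yG \<otimes>\<^bsub>Ggrp p\<^esub> \<phi> xG)" by simp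
  then have "mat_mult_mod p (mat_mult_mod p (tmat 1 3) C) (mat_mult_mod p (tmat 3 5) D)
      = mat_mult_mod p (mat_mult_mod p (tmat 3 5) D) (mat_mult_mod p (tmat 1 3) C)"
    by (simp add: snd_G_mult ex ey)
  then show False using ncomm[OF C D zC zD] by simp
qed

lemma in_coset: assumes g: "g \<in> carrier (Ggrp p)" and t: "t \<in> carrier (Ggrp p)"
  and e: "Kgrp p #>\<^bsub>Ggrp p\<^esub> g = Kgrp p #>\<^bsub>Ggrp p\<^esub> t"
  shows "\<exists>k\<in>Kgrp p. g = k \<otimes>\<^bsub>Ggrp p\<^esub> t"
proof -
  have "g \<in> Kgrp p #>\<^bsub>Ggrp p\<^esub> g" by (rule group.rcos_self[OF G_group g K_sub])
  then show ?thesis using e by (auto simp: r_coset_def)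
qed

lemma not_induced:
  assumes px: "\<psi> (Kgrp p #>\<^bsub>Ggrp p\<^esub> xG) = Kgrp p #>\<^bsub>Ggrp p\<^esub> tG 1 3"
    and py: "\<psi> (Kgrp p #>\<^bsub>Ggrp p\<^esub> yG) = Kgrp p #>\<^bsub>Ggrp p\<^esub> tG 3 5"
  shows "\<not> (\<exists>\<phi> \<in> hom (Ggrp p) (Ggrp p). \<forall>g \<in> carrier (Ggrp p). \<psi> (Kgrp p #>\<^bsub>Ggrp p\<^esub> g) = Kgrp p #>\<^bsub>Ggrp p\<^esub> \<phi> g)"
proof
  assume "\<exists>\<phi> \<in> hom (Ggrp p) (Ggrp p). \<forall>g \<in> carrier (Ggrp p). \<psi> (Kgrp p #>\<^bsub>Ggrp p\<^esub> g) = Kgrp p #>\<^bsub>Ggrp p\<^esub> \<phi> g"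
  then obtain \<phi> where phi: "\<phi> \<in> hom (Ggrp p) (Ggrp p)"
    and ind: "\<And>g. g \<in> carrier (Ggrp p) \<Longrightarrow> \<psi> (Kgrp p #>\<^bsub>Ggrp p\<^esub> g) = Kgrp p #>\<^bsub>Ggrp p\<^esub> \<phi> g" by blast
  have t13: "tG 1 3 \<in> carrier (Ggrp p)" and t35: "tG 3 5 \<in> carrier (Ggrp p)" by (simp_all add: tG_car prs_def)
  obtain k1 where k1: "k1 \<in> Kgrp p" and e1: "\<phi> xG = k1 \<otimes>\<^bsub>Ggrp p\<^esub> tG 1 3"
    using in_coset[OF hom_in_carrier[OF phi xG_car] t13] ind[OF xG_car] px by metis
  obtain k2 where k2: "k2 \<in> Kgrp p" and e2: "\<phi> yG = k2 \<otimes>\<^bsub>Ggrp p\<^esub> tG 3 5"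
    using in_coset[OF hom_in_carrier[OF phi yG_car] t35] ind[OF yG_car] py by metis
  have K1: "snd k1 \<in> S 4" and K2: "snd k2 \<in> S 4" using k1 k2 K_elem by blast+
  have "snd (\<phi> xG) = mat_mult_mod p (tmat 1 3) (snd k1)"
    using S4_central[OF K1 tmat_car[of 1 3]] by (simp add: e1 snd_G_mult tG_def embH_def prs_def)
  moreover have "snd (\<phi> yG) = mat_mult_mod p (tmat 3 5) (snd k2)"
    using S4_central[OF K2 tmat_car[of 3 5]] by (simp add: e2 snd_G_mult tG_def embH_def prs_def)
  ultimately show False
    using final_contra[OF S4_car[OF K1] S4_car[OF K2] S4_Z7[OF K1] S4_Z7[OF K2] phi] by blast
qed

lemma half:
  assumes u: "u \<in> carrier (Ggrp p)" and T: "T \<in> unitri_carrier p"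
    and pu: "\<psi>u u \<in> Agrp p" and cos: "Kgrp p #>\<^bsub>Ggrp p\<^esub> \<psi>u u = Kgrp p #>\<^bsub>Ggrp p\<^esub> embH T"
    and phi: "\<phi> \<in> hom (Ggrp p) (Ggrp p)"
    and aK: "\<And>h. h \<in> carrier (Ggrp p) \<Longrightarrow> \<alpha> u h \<in> Kgrp p"
    and eq: "\<And>h. h \<in> carrier (Ggrp p) \<Longrightarrow>
       u \<otimes>\<^bsub>Ggrp p\<^esub> \<psi>u u \<otimes>\<^bsub>Ggrp p\<^esub> h \<otimes>\<^bsub>Ggrp p\<^esub> inv\<^bsub>Ggrp p\<^esub> (\<psi>u u)
     = u \<otimes>\<^bsub>Ggrp p\<^esub> \<phi> u \<otimes>\<^bsub>Ggrp p\<^esub> h \<otimes>\<^bsub>Ggrp p\<^esub> inv\<^bsub>Ggrp p\<^esub> (\<phi> u) \<otimes>\<^bsub>Ggrp p\<^esub> \<alpha> u h"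
  shows "\<exists>C \<in> unitri_carrier p. Z7 C \<and> snd (\<phi> u) = mat_mult_mod p T C"
proof -
  interpret G: group "Ggrp p" by (rule G_group)
  have Kc: "Kgrp p \<subseteq> carrier (Ggrp p)" using K_sub subgroup.subset by blast
  have t: "embH T \<in> carrier (Ggrp p)" by (rule embH_car[OF T])
  have s: "\<psi>u u \<in> carrier (Ggrp p)" using pu A_sub subgroup.subset by blast
  obtain k1 where k1: "k1 \<in> Kgrp p" and e1: "\<psi>u u = k1 \<otimes>\<^bsub>Ggrp p\<^esub> embH T"
    using in_coset[OF s t cos] by blast
  have k1c: "k1 \<in> carrier (Ggrp p)" using k1 Kc by blast
  have a: "\<phi> u \<in> carrier (Ggrp p)" by (rule hom_in_carrier[OF phi u])
  define c where "c = inv\<^bsub>Ggrp p\<^esub> (embH T) \<otimes>\<^bsub>Ggrp p\<^esub> \<phi> u"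
  have c: "c \<in> carrier (Ggrp p)" using a t by (simp add: c_def)
  have tc: "embH T \<otimes>\<^bsub>Ggrp p\<^esub> c = \<phi> u" using a t by (simp add: c_def G.m_assoc[symmetric])
  have key: "c \<otimes>\<^bsub>Ggrp p\<^esub> h = inv\<^bsub>Ggrp p\<^esub> (\<alpha> u h) \<otimes>\<^bsub>Ggrp p\<^esub> (h \<otimes>\<^bsub>Ggrp p\<^esub> c)"
    if h: "h \<in> carrier (Ggrp p)" for h
  proof -
    have b: "\<alpha> u h \<in> carrier (Ggrp p)" using aK[OF h] Kc by blast
    have "\<psi>u u \<otimes>\<^bsub>Ggrp p\<^esub> h \<otimes>\<^bsub>Ggrp p\<^esub> inv\<^bsub>Ggrp p\<^esub> (\<psi>u u)
        = \<phi> u \<otimes>\<^bsub>Ggrp p\<^esub> h \<otimes>\<^bsub>Ggrp p\<^esub> inv\<^bsub>Ggrp p\<^esub> (\<phi> u) \<otimes>\<^bsub>Ggrp p\<^esub> \<alpha> u h"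
      using eq[OF h] u s h a b by (simp add: G.m_assoc)
    then have "(k1 \<otimes>\<^bsub>Ggrp p\<^esub> embH T) \<otimes>\<^bsub>Ggrp p\<^esub> h \<otimes>\<^bsub>Ggrp p\<^esub> inv\<^bsub>Ggrp p\<^esub> (k1 \<otimes>\<^bsub>Ggrp p\<^esub> embH T)
        = (embH T \<otimes>\<^bsub>Ggrp p\<^esub> c) \<otimes>\<^bsub>Ggrp p\<^esub> h \<otimes>\<^bsub>Ggrp p\<^esub> inv\<^bsub>Ggrp p\<^esub> (embH T \<otimes>\<^bsub>Ggrp p\<^esub> c) \<otimes>\<^bsub>Ggrp p\<^esub> \<alpha> u h"
      by (simp add: e1 tc)
    note r = G.core_alg[OF t c h k1c b]
    show ?thesis
      apply (rule r)
      using K_central[OF k1] apply blast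
      using K_central[OF aK[OF h]] apply blast
      by (rule \<open>k1 \<otimes>\<^bsub>Ggrp p\<^esub> embH T \<otimes>\<^bsub>Ggrp p\<^esub> h \<otimes>\<^bsub>Ggrp p\<^esub> inv\<^bsub>Ggrp p\<^esub> (k1 \<otimes>\<^bsub>Ggrp p\<^esub> embH T) =
        embH T \<otimes>\<^bsub>Ggrp p\<^esub> c \<otimes>\<^bsub>Ggrp p\<^esub> h \<otimes>\<^bsub>Ggrp p\<^esub> inv\<^bsub>Ggrp p\<^esub> (embH T \<otimes>\<^bsub>Ggrp p\<^esub> c) \<otimes>\<^bsub>Ggrp p\<^esub> \<alpha> u h\<close>)
  qed
  have Cc: "snd c \<in> unitri_carrier p" using c by (auto simp: G_car)
  have "Z7 (snd c)"
  proof (rule coreH[OF Cc])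
    fix M assume M: "M \<in> unitri_carrier p"
    have h: "embH M \<in> carrier (Ggrp p)" by (rule embH_car[OF M])
    have ib: "inv\<^bsub>Ggrp p\<^esub> (\<alpha> u (embH M)) \<in> Kgrp p" by (rule subgroup.m_inv_closed[OF K_sub aK[OF h]])
    have "snd (c \<otimes>\<^bsub>Ggrp p\<^esub> embH M) = snd (inv\<^bsub>Ggrp p\<^esub> (\<alpha> u (embH M)) \<otimes>\<^bsub>Ggrp p\<^esub> (embH M \<otimes>\<^bsub>Ggrp p\<^esub> c))"
      using key[OF h] by simp
    then have "mat_mult_mod p (snd c) M = mat_mult_mod p (snd (inv\<^bsub>Ggrp p\<^esub> (\<alpha> u (embH M)))) (mat_mult_mod p M (snd c))"
      by (simp add: snd_G_mult embH_def)
    then show "\<exists>B\<in>S 4. mat_mult_mod p (snd c) M = mat_mult_mod p B (mat_mult_mod p M (snd c))"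
      using K_elem[OF ib] by blast
  qed
  moreover have "snd (\<phi> u) = mat_mult_mod p T (snd c)"
    using tc[symmetric] by (simp add: snd_G_mult embH_def)
  ultimately show ?thesis using Cc by blast
qed

lemma no_phi_alpha:
  assumes px: "\<psi> (Kgrp p #>\<^bsub>Ggrp p\<^esub> xG) = Kgrp p #>\<^bsub>Ggrp p\<^esub> tG 1 3"
    and py: "\<psi> (Kgrp p #>\<^bsub>Ggrp p\<^esub> yG) = Kgrp p #>\<^bsub>Ggrp p\<^esub> tG 3 5"
    and lift: "\<forall>g \<in> carrier (Ggrp p). \<psi>u g \<in> Agrp p \<and> Kgrp p #>\<^bsub>Ggrp p\<^esub> \<psi>u g = \<psi> (Kgrp p #>\<^bsub>Ggrp p\<^esub> g)"
  shows "\<not> (\<exists>\<phi> \<alpha>. \<phi> \<in> hom (Ggrp p) (Ggrp p) \<and> bilinear_on (Ggrp p) (Kgrp p) \<alpha> \<and>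
                 (\<forall>g \<in> carrier (Ggrp p). \<forall>h \<in> carrier (Ggrp p).
                    g \<otimes>\<^bsub>Ggrp p\<^esub> \<psi>u g \<otimes>\<^bsub>Ggrp p\<^esub> h \<otimes>\<^bsub>Ggrp p\<^esub> inv\<^bsub>Ggrp p\<^esub> (\<psi>u g)
                  = g \<otimes>\<^bsub>Ggrp p\<^esub> \<phi> g \<otimes>\<^bsub>Ggrp p\<^esub> h \<otimes>\<^bsub>Ggrp p\<^esub> inv\<^bsub>Ggrp p\<^esub> (\<phi> g) \<otimes>\<^bsub>Ggrp p\<^esub> \<alpha> g h))"
proof
  assume "\<exists>\<phi> \<alpha>. \<phi> \<in> hom (Ggrp p) (Ggrp p) \<and> bilinear_on (Ggrp p) (Kgrp p) \<alpha> \<and>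
                 (\<forall>g \<in> carrier (Ggrp p). \<forall>h \<in> carrier (Ggrp p).
                    g \<otimes>\<^bsub>Ggrp p\<^esub> \<psi>u g \<otimes>\<^bsub>Ggrp p\<^esub> h \<otimes>\<^bsub>Ggrp p\<^esub> inv\<^bsub>Ggrp p\<^esub> (\<psi>u g)
                  = g \<otimes>\<^bsub>Ggrp p\<^esub> \<phi> g \<otimes>\<^bsub>Ggrp p\<^esub> h \<otimes>\<^bsub>Ggrp p\<^esub> inv\<^bsub>Ggrp p\<^esub> (\<phi> g) \<otimes>\<^bsub>Ggrp p\<^esub> \<alpha> g h)"
  then obtain \<phi> \<alpha> where phi: "\<phi> \<in> hom (Ggrp p) (Ggrp p)" and bil: "bilinear_on (Ggrp p) (Kgrp p) \<alpha>"
    and eq: "\<forall>g \<in> carrier (Ggrp p). \<forall>h \<in> carrier (Ggrp p).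
                    g \<otimes>\<^bsub>Ggrp p\<^esub> \<psi>u g \<otimes>\<^bsub>Ggrp p\<^esub> h \<otimes>\<^bsub>Ggrp p\<^esub> inv\<^bsub>Ggrp p\<^esub> (\<psi>u g)
                  = g \<otimes>\<^bsub>Ggrp p\<^esub> \<phi> g \<otimes>\<^bsub>Ggrp p\<^esub> h \<otimes>\<^bsub>Ggrp p\<^esub> inv\<^bsub>Ggrp p\<^esub> (\<phi> g) \<otimes>\<^bsub>Ggrp p\<^esub> \<alpha> g h"
    by blast
  have aK: "\<And>g h. g \<in> carrier (Ggrp p) \<Longrightarrow> h \<in> carrier (Ggrp p) \<Longrightarrow> \<alpha> g h \<in> Kgrp p"
    using bil by (simp add: bilinear_on_def)
  obtain C where C: "C \<in> unitri_carrier p" "Z7 C" "snd (\<phi> xG) = mat_mult_mod p (tmat 1 3) C"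
    using half[OF xG_car tmat_car[of 1 3], of \<psi>u \<phi> \<alpha>] lift xG_car px phi aK[OF xG_car] eq
    by (auto simp: tG_def prs_def)
  obtain D where D: "D \<in> unitri_carrier p" "Z7 D" "snd (\<phi> yG) = mat_mult_mod p (tmat 3 5) D"
    using half[OF yG_car tmat_car[of 3 5], of \<psi>u \<phi> \<alpha>] lift yG_car py phi aK[OF yG_car] eq
    by (auto simp: tG_def prs_def)
  show False by (rule final_contra[OF C(1) D(1) C(2) D(2) phi C(3) D(3)])
qed

end


lemma eq_sub: assumes G: "group G" and Q: "group Q" and h1: "f1 \<in> hom G Q" and h2: "f2 \<in> hom G Q"
  shows "subgroup {g \<in> carrier G. f1 g = f2 g} G"
proof -
  interpret G: group G by (rule G)
  have g1: "group_hom G Q f1" unfolding group_hom_def group_hom_axioms_def using G Q h1 by simp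
  have g2: "group_hom G Q f2" unfolding group_hom_def group_hom_axioms_def using G Q h2 by simp
  show ?thesis
  proof (rule G.subgroupI)
    show "{g \<in> carrier G. f1 g = f2 g} \<subseteq> carrier G" by auto
    show "{g \<in> carrier G. f1 g = f2 g} \<noteq> {}"
      using group_hom.hom_one[OF g1] group_hom.hom_one[OF g2] by auto
    show "inv\<^bsub>G\<^esub> a \<in> {g \<in> carrier G. f1 g = f2 g}" if "a \<in> {g \<in> carrier G. f1 g = f2 g}" for a
      using that group_hom.hom_inv[OF g1] group_hom.hom_inv[OF g2] by auto
    show "a \<otimes>\<^bsub>G\<^esub> b \<in> {g \<in> carrier G. f1 g = f2 g}"
      if "a \<in> {g \<in> carrier G. f1 g = f2 g}" "b \<in> {g \<in> carrier G. f1 g = f2 g}" for a b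
      using that hom_mult[OF h1] hom_mult[OF h2] by auto
  qed
qed

context ut begin

definition Tset :: "(nat \<Rightarrow> nat \<Rightarrow> int) set" where
  "Tset = {tmat i j | i j. (i,j) \<in> prs}"

lemma Tset_car: "Tset \<subseteq> carrier (UT5 p)" by (auto simp: Tset_def tcar)

lemma gen_sub: "subgroup (generate (UT5 p) Tset) (UT5 p)"
  by (rule group.generate_is_subgroup[OF UT5_group Tset_car])

lemma gen_car: "generate (UT5 p) Tset \<subseteq> unitri_carrier p"
  using subgroup.subset[OF gen_sub] by (simp add: car_H)

lemma tp_gen: assumes "(i,j) \<in> prs" shows "tp i j c \<in> generate (UT5 p) Tset"
proof -
  have "tmat i j \<in> generate (UT5 p) Tset" using assms by (auto simp: Tset_def intro!: generate.incl)
  then show ?thesis unfolding tp_pow_mod[OF assms] by (rule subgroup_pow_closed[OF gen_sub])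
qed

lemma mm_gen: "U \<in> generate (UT5 p) Tset \<Longrightarrow> V \<in> generate (UT5 p) Tset \<Longrightarrow> mat_mult_mod p U V \<in> generate (UT5 p) Tset"
  using subgroup.m_closed[OF gen_sub] by (simp add: mult_H)

lemma step: assumes M: "M \<in> unitri_carrier p" and Y: "V \<in> generate (UT5 p) Tset"
  and a: "agr (Suc k) M V" and nx: "S (Suc k) \<subseteq> generate (UT5 p) Tset"
  shows "M \<in> generate (UT5 p) Tset"
proof -
  have Yc: "V \<in> unitri_carrier p" using Y gen_car by blast
  let ?z = "mat_mult_mod p M (minv V)"
  have zc: "?z \<in> unitri_carrier p" by (simp add: mult_car M minv_car)
  have zY: "mat_mult_mod p ?z V = M" by (simp add: assoc M minv_car Yc minv_l r_one)
  have "lev (Suc k) ?z" using agree[OF zc Yc] a zY by simp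
  then have "?z \<in> generate (UT5 p) Tset" using zc nx by (auto simp: S_def)
  then show ?thesis using mm_gen[OF _ Y] zY by metis
qed

lemma S5_gen: "S 5 \<subseteq> generate (UT5 p) Tset"
proof
  fix M assume "M \<in> S 5"
  then have Mc: "M \<in> unitri_carrier p" and l: "lev 5 M" by (auto simp: S_def)
  have "M = mat_one" by (rule mat_eqI[OF Mc one_car]) (use l in \<open>simp_all add: lev_def one_e\<close>)
  then show "M \<in> generate (UT5 p) Tset" using generate.one[of "UT5 p" Tset] by (simp add: one_H)
qed

lemma S4_gen': "S 4 \<subseteq> generate (UT5 p) Tset"
proof
  fix M assume "M \<in> S 4"
  then have Mc: "M \<in> unitri_carrier p" and l: "lev 4 M" by (auto simp: S_def)
  have pr: "(1, 5) \<in> prs" by (simp add: prs_def)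
  have a: "agr (Suc 4) M (tp 1 5 (M 1 5))"
    using l by (simp add: agr_def lev_def tp_e modid[OF Mc])
  show "M \<in> generate (UT5 p) Tset" by (rule step[OF Mc tp_gen[OF pr] a]) (use S5_gen in simp)
qed

lemma S3_gen: "S 3 \<subseteq> generate (UT5 p) Tset"
proof
  fix M assume "M \<in> S 3"
  then have Mc: "M \<in> unitri_carrier p" and l: "lev 3 M" by (auto simp: S_def)
  let ?Y = "mat_mult_mod p (tp 1 4 (M 1 4)) (tp 2 5 (M 2 5))"
  have Y: "?Y \<in> generate (UT5 p) Tset" by (intro mm_gen tp_gen) (simp_all add: prs_def)
  have a: "agr (Suc 3) M ?Y"
    using l by (simp add: agr_def lev_def tp_def mk_mult mk_e modid[OF Mc])
  show "M \<in> generate (UT5 p) Tset" by (rule step[OF Mc Y a]) (use S4_gen' in simp)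
qed

lemma S2_gen: "S 2 \<subseteq> generate (UT5 p) Tset"
proof
  fix M assume "M \<in> S 2"
  then have Mc: "M \<in> unitri_carrier p" and l: "lev 2 M" by (auto simp: S_def)
  let ?Y = "mat_mult_mod p (mat_mult_mod p (tp 1 3 (M 1 3)) (tp 2 4 (M 2 4))) (tp 3 5 (M 3 5))"
  have Y: "?Y \<in> generate (UT5 p) Tset" by (intro mm_gen tp_gen) (simp_all add: prs_def)
  have a: "agr (Suc 2) M ?Y"
    using l by (simp add: agr_def lev_def tp_def mk_mult mk_e modid[OF Mc])
  show "M \<in> generate (UT5 p) Tset" by (rule step[OF Mc Y a]) (use S3_gen in simp)
qed

lemma H_gen: "unitri_carrier p \<subseteq> generate (UT5 p) Tset"
proof
  fix M assume Mc: "M \<in> unitri_carrier p"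
  let ?Y = "mat_mult_mod p (mat_mult_mod p (mat_mult_mod p (tp 1 2 (M 1 2)) (tp 2 3 (M 2 3))) (tp 3 4 (M 3 4))) (tp 4 5 (M 4 5))"
  have Y: "?Y \<in> generate (UT5 p) Tset" by (intro mm_gen tp_gen) (simp_all add: prs_def)
  have a: "agr (Suc 1) M ?Y"
    by (simp add: agr_def tp_def mk_mult mk_e modid[OF Mc])
  show "M \<in> generate (UT5 p) Tset" by (rule step[OF Mc Y a]) (use S2_gen in simp)
qed

end


context ut begin

lemma xpow: "xG [^]\<^bsub>Ggrp p\<^esub> (n::nat) = ((int n mod int p, 0), mat_one)"
  by (induction n) (simp_all add: G_one xG_def G_mult l_one one_car mod_simps add.commute)

lemma ypow: "yG [^]\<^bsub>Ggrp p\<^esub> (n::nat) = ((0, int n mod int p), mat_one)"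
  by (induction n) (simp_all add: G_one yG_def G_mult l_one one_car mod_simps add.commute)

lemma G_decomp: assumes g: "g \<in> carrier (Ggrp p)"
  shows "g = xG [^]\<^bsub>Ggrp p\<^esub> nat (fst (fst g)) \<otimes>\<^bsub>Ggrp p\<^esub> yG [^]\<^bsub>Ggrp p\<^esub> nat (snd (fst g)) \<otimes>\<^bsub>Ggrp p\<^esub> embH (snd g)"
proof -
  obtain a b M where gM: "g = ((a,b),M)" and ab: "0 \<le> a" "a < int p" "0 \<le> b" "b < int p" and M: "M \<in> unitri_carrier p"
    using g by (auto simp: G_car)
  show ?thesis using ab by (simp add: gM xpow ypow embH_def G_mult l_one one_car M)
qed

lemma unique:
  assumes hom: "\<phi> \<in> hom (Ggrp p Mod Kgrp p) (Ggrp p Mod Kgrp p)"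
    and ext: "\<phi> \<in> extensional (carrier (Ggrp p Mod Kgrp p))"
    and px: "\<phi> (Kgrp p #>\<^bsub>Ggrp p\<^esub> xG) = Kgrp p #>\<^bsub>Ggrp p\<^esub> tG 1 3"
    and py: "\<phi> (Kgrp p #>\<^bsub>Ggrp p\<^esub> yG) = Kgrp p #>\<^bsub>Ggrp p\<^esub> tG 3 5"
    and pt: "\<forall>i j. 1 \<le> i \<and> i < j \<and> j \<le> 5 \<longrightarrow> \<phi> (Kgrp p #>\<^bsub>Ggrp p\<^esub> tG i j) = Kgrp p"
  shows "\<phi> = psi"
proof (rule extensionalityI[OF ext psi_ext])
  interpret G: group "Ggrp p" by (rule G_group)
  interpret N: normal "Kgrp p" "Ggrp p" by (rule K_normal)
  have Qg: "group (Ggrp p Mod Kgrp p)" by (rule N.factorgroup_is_group)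
  have h1: "\<phi> \<circ> (\<lambda>a. Kgrp p #>\<^bsub>Ggrp p\<^esub> a) \<in> hom (Ggrp p) (Ggrp p Mod Kgrp p)"
    by (rule hom_compose[OF N.r_coset_hom_Mod hom])
  have h2: "psi \<circ> (\<lambda>a. Kgrp p #>\<^bsub>Ggrp p\<^esub> a) \<in> hom (Ggrp p) (Ggrp p Mod Kgrp p)"
    by (rule hom_compose[OF N.r_coset_hom_Mod psi_hom])
  define W where "W = {g \<in> carrier (Ggrp p). (\<phi> \<circ> (\<lambda>a. Kgrp p #>\<^bsub>Ggrp p\<^esub> a)) g = (psi \<circ> (\<lambda>a. Kgrp p #>\<^bsub>Ggrp p\<^esub> a)) g}"
  have W: "subgroup W (Ggrp p)" unfolding W_def by (rule eq_sub[OF G_group Qg h1 h2])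
  have xW: "xG \<in> W" using px psi_x xG_car by (simp add: W_def)
  have yW: "yG \<in> W" using py psi_y yG_car by (simp add: W_def)
  have tW: "tG i j \<in> W" if "(i,j) \<in> prs" for i j
    using pt psi_t[OF that] tG_car[OF that] that by (simp add: W_def prs_iff)
  have gh: "group_hom (UT5 p) (Ggrp p) embH"
    unfolding group_hom_def group_hom_axioms_def using UT5_group G_group embH_hom by simp
  have eW: "embH M \<in> W" if "M \<in> generate (UT5 p) Tset" for M
    using that
  proof (induction rule: generate.induct)
    case one then show ?case using group_hom.hom_one[OF gh] subgroup.one_closed[OF W] by simp
  next
    case (incl h) then obtain i j where "h = tmat i j" "(i,j) \<in> prs" by (auto simp: Tset_def)
    then show ?case using tW by (simp add: tG_def)
  next
    case (inv h)
    then have hc: "h \<in> carrier (UT5 p)" using Tset_car by blast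
    obtain i j where "h = tmat i j" "(i,j) \<in> prs" using inv by (auto simp: Tset_def)
    then have "embH h \<in> W" using tW by (simp add: tG_def)
    then show ?case using group_hom.hom_inv[OF gh hc] subgroup.m_inv_closed[OF W] by simp
  next
    case (eng h1 h2)
    have c1: "h1 \<in> carrier (UT5 p)" and c2: "h2 \<in> carrier (UT5 p)"
      using eng.hyps gen_car by (auto simp: car_H)
    show ?case using hom_mult[OF embH_hom c1 c2] subgroup.m_closed[OF W eng.IH] by simp
  qed
  fix Q1 assume "Q1 \<in> carrier (Ggrp p Mod Kgrp p)"
  then obtain g where g: "g \<in> carrier (Ggrp p)" and Q1g: "Q1 = Kgrp p #>\<^bsub>Ggrp p\<^esub> g"
    by (auto simp: carrier_FactGroup)
  have sg: "snd g \<in> generate (UT5 p) Tset" using g H_gen by (auto simp: G_car)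
  have "g \<in> W"
    by (subst G_decomp[OF g])
       (intro subgroup.m_closed[OF W] subgroup_pow_closed[OF W] xW yW eW[OF sg])
  then show "\<phi> Q1 = psi Q1" by (simp add: W_def Q1g)
qed

end

theorem mainTheorem11:
  fixes p :: nat
  assumes "Factorial_Ring.prime p" and "p \<ge> 5"
  defines "G \<equiv> Ggrp p" and "K \<equiv> Kgrp p" and "A \<equiv> Agrp p"
  defines "IsPsi \<equiv> (\<lambda>\<psi>. \<psi> \<in> hom (G Mod K) (G Mod K)
              \<and> \<psi> \<in> extensional (carrier (G Mod K))
              \<and> \<psi> (K #>\<^bsub>G\<^esub> xG) = K #>\<^bsub>G\<^esub> tG 1 3
              \<and> \<psi> (K #>\<^bsub>G\<^esub> yG) = K #>\<^bsub>G\<^esub> tG 3 5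
              \<and> (\<forall>i j. 1 \<le> i \<and> i < j \<and> j \<le> 5 \<longrightarrow> \<psi> (K #>\<^bsub>G\<^esub> tG i j) = K))"
  shows "K = embH ` generate (UT5 p) {tmat 1 5}
    \<and> K \<subseteq> center_of G
    \<and> comm_group ((G\<lparr>carrier := A\<rparr>) Mod K)
    \<and> \<not> comm_group (G\<lparr>carrier := A\<rparr>)
    \<and> (\<exists>!\<psi>. IsPsi \<psi>)
    \<and> (\<forall>\<psi>. IsPsi \<psi> \<longrightarrow>
         \<psi> ` carrier (G Mod K) \<subseteq> {K #>\<^bsub>G\<^esub> a | a. a \<in> A}
       \<and> \<not> (\<exists>\<phi> \<in> hom G G. \<forall>g \<in> carrier G. \<psi> (K #>\<^bsub>G\<^esub> g) = K #>\<^bsub>G\<^esub> \<phi> g)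
       \<and> (\<forall>\<psi>u. (\<forall>g \<in> carrier G. \<psi>u g \<in> A \<and> K #>\<^bsub>G\<^esub> \<psi>u g = \<psi> (K #>\<^bsub>G\<^esub> g)) \<longrightarrow>
            \<not> (\<exists>\<phi> \<alpha>. \<phi> \<in> hom G G \<and> bilinear_on G K \<alpha> \<and>
                 (\<forall>g \<in> carrier G. \<forall>h \<in> carrier G.
                    g \<otimes>\<^bsub>G\<^esub> \<psi>u g \<otimes>\<^bsub>G\<^esub> h \<otimes>\<^bsub>G\<^esub> inv\<^bsub>G\<^esub> (\<psi>u g)
                  = g \<otimes>\<^bsub>G\<^esub> \<phi> g \<otimes>\<^bsub>G\<^esub> h \<otimes>\<^bsub>G\<^esub> inv\<^bsub>G\<^esub> (\<phi> g) \<otimes>\<^bsub>G\<^esub> \<alpha> g h))))"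
proof -
  interpret ut p by unfold_locales (use assms(2) in simp)
  have isP: "IsPsi (ut.psi p)"
    unfolding IsPsi_def G_def K_def using psi_hom psi_ext psi_x psi_y psi_t prs_iff by auto
  have uq: "\<psi> = ut.psi p" if "IsPsi \<psi>" for \<psi>
    using that unfolding IsPsi_def G_def K_def by (intro unique) auto
  have vals: "\<psi> (Kgrp p #>\<^bsub>Ggrp p\<^esub> xG) = Kgrp p #>\<^bsub>Ggrp p\<^esub> tG 1 3 \<and>
              \<psi> (Kgrp p #>\<^bsub>Ggrp p\<^esub> yG) = Kgrp p #>\<^bsub>Ggrp p\<^esub> tG 3 5" if "IsPsi \<psi>" for \<psi>
    using that unfolding IsPsi_def G_def K_def by auto
  show ?thesis
    unfolding G_def K_def A_def
  proof (intro conjI)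
    show "Kgrp p = embH ` generate (UT5 p) {tmat 1 5}" by (simp add: Kgrp_def gamma4)
    show "Kgrp p \<subseteq> center_of (Ggrp p)" by (rule K_center)
    show "comm_group (Ggrp p\<lparr>carrier := Agrp p\<rparr> Mod Kgrp p)" by (rule AK_comm)
    show "\<not> comm_group (Ggrp p\<lparr>carrier := Agrp p\<rparr>)" by (rule A_noncomm)
    show "\<exists>!\<psi>. IsPsi \<psi>" using isP uq by blast
    show "\<forall>\<psi>. IsPsi \<psi> \<longrightarrow>
         \<psi> ` carrier (Ggrp p Mod Kgrp p) \<subseteq> {Kgrp p #>\<^bsub>Ggrp p\<^esub> a | a. a \<in> Agrp p}
       \<and> \<not> (\<exists>\<phi> \<in> hom (Ggrp p) (Ggrp p). \<forall>g \<in> carrier (Ggrp p). \<psi> (Kgrp p #>\<^bsub>Ggrp p\<^esub> g) = Kgrp p #>\<^bsub>Ggrp p\<^esub> \<phi> g)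
       \<and> (\<forall>\<psi>u. (\<forall>g \<in> carrier (Ggrp p). \<psi>u g \<in> Agrp p \<and> Kgrp p #>\<^bsub>Ggrp p\<^esub> \<psi>u g = \<psi> (Kgrp p #>\<^bsub>Ggrp p\<^esub> g)) \<longrightarrow>
            \<not> (\<exists>\<phi> \<alpha>. \<phi> \<in> hom (Ggrp p) (Ggrp p) \<and> bilinear_on (Ggrp p) (Kgrp p) \<alpha> \<and>
                 (\<forall>g \<in> carrier (Ggrp p). \<forall>h \<in> carrier (Ggrp p).
                    g \<otimes>\<^bsub>Ggrp p\<^esub> \<psi>u g \<otimes>\<^bsub>Ggrp p\<^esub> h \<otimes>\<^bsub>Ggrp p\<^esub> inv\<^bsub>Ggrp p\<^esub> (\<psi>u g)
                  = g \<otimes>\<^bsub>Ggrp p\<^esub> \<phi> g \<otimes>\<^bsub>Ggrp p\<^esub> h \<otimes>\<^bsub>Ggrp p\<^esub> inv\<^bsub>Ggrp p\<^esub> (\<phi> g) \<otimes>\<^bsub>Ggrp p\<^esub> \<alpha> g h)))"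
    proof (intro allI impI conjI)
      fix \<psi> assume P: "IsPsi \<psi>"
      have e: "\<psi> = ut.psi p" by (rule uq[OF P])
      have v1: "\<psi> (Kgrp p #>\<^bsub>Ggrp p\<^esub> xG) = Kgrp p #>\<^bsub>Ggrp p\<^esub> tG 1 3"
        and v2: "\<psi> (Kgrp p #>\<^bsub>Ggrp p\<^esub> yG) = Kgrp p #>\<^bsub>Ggrp p\<^esub> tG 3 5" using vals[OF P] by auto
      show "\<psi> ` carrier (Ggrp p Mod Kgrp p) \<subseteq> {Kgrp p #>\<^bsub>Ggrp p\<^esub> a | a. a \<in> Agrp p}"
        using psi_img by (simp add: e)
      show "\<not> (\<exists>\<phi> \<in> hom (Ggrp p) (Ggrp p). \<forall>g \<in> carrier (Ggrp p). \<psi> (Kgrp p #>\<^bsub>Ggrp p\<^esub> g) = Kgrp p #>\<^bsub>Ggrp p\<^esub> \<phi> g)"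
        by (rule not_induced[OF v1 v2])
      fix \<psi>u assume L: "\<forall>g \<in> carrier (Ggrp p). \<psi>u g \<in> Agrp p \<and> Kgrp p #>\<^bsub>Ggrp p\<^esub> \<psi>u g = \<psi> (Kgrp p #>\<^bsub>Ggrp p\<^esub> g)"
      show "\<not> (\<exists>\<phi> \<alpha>. \<phi> \<in> hom (Ggrp p) (Ggrp p) \<and> bilinear_on (Ggrp p) (Kgrp p) \<alpha> \<and>
                 (\<forall>g \<in> carrier (Ggrp p). \<forall>h \<in> carrier (Ggrp p).
                    g \<otimes>\<^bsub>Ggrp p\<^esub> \<psi>u g \<otimes>\<^bsub>Ggrp p\<^esub> h \<otimes>\<^bsub>Ggrp p\<^esub> inv\<^bsub>Ggrp p\<^esub> (\<psi>u g)
                  = g \<otimes>\<^bsub>Ggrp p\<^esub> \<phi> g \<otimes>\<^bsub>Ggrp p\<^esub> h \<otimes>\<^bsub>Ggrp p\<^esub> inv\<^bsub>Ggrp p\<^esub> (\<phi> g) \<otimes>\<^bsub>Ggrp p\<^esub> \<alpha> g h))"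
        by (rule no_phi_alpha[OF v1 v2 L])
    qed
  qed
qed


end
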